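(* Let $X_1,\dots,X_n$ be i.i.d. copies of a random variable $X$ satisfying the IHR assumption, with order statistics $X_{(1)}\ge\cdots\ge X_{(n)}$, let $k\in\{2,\dots,n\}$, and let $S_{k-1}:=X_{(k-1)}-X_{(k)}$. Then $X_{(k)}$ and $S_{k-1}$ are negatively associated: for every pair of non-increasing functions $f_1,f_2:\mathbb{R}\to\mathbb{R}$ (for which the expectations exist), $$\mathbb{E}\big[f_1(X_{(k)})f_2(S_{k-1})\big]\le\mathbb{E}\big[f_1(X_{(k)})\big]\,\mathbb{E}\big[f_2(S_{k-1})\big].$$
   Context: $X$ is a continuous real random variable with support $[0,\infty)$, density $f$, c.d.f. $F$ and hazard rate $h=f/(1-F)$; IHR assumption: $h$ non-decreasing on $[0,\infty)$ and $L:=\inf_x h(x)>0$. Order statistics are sorted decreasingly. *)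

theory Defs
  imports "HOL-Probability.Probability"
begin

definition cdf_of_density :: "(real \<Rightarrow> real) \<Rightarrow> real \<Rightarrow> real" where
  "cdf_of_density f x = (LINT t:{..x}|lborel. f t)"

definition hazard :: "(real \<Rightarrow> real) \<Rightarrow> real \<Rightarrow> real" where
  "hazard f x = f x / (1 - cdf_of_density f x)"

definition IHR_density :: "(real \<Rightarrow> real) \<Rightarrow> bool" where
  "IHR_density f \<longleftrightarrow>
     f \<in> borel_measurable lborel \<and> (\<forall>x. 0 \<le> f x) \<and> (\<forall>x<0. f x = 0) \<and>
     integrable lborel f \<and> (LINT t|lborel. f t) = 1 \<and>
     (\<forall>x. cdf_of_density f x < 1) \<and>
     mono_on {0..} (hazard f) \<and>
     (INF x\<in>{0..}. hazard f x) > 0"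

definition ord_stat :: "nat \<Rightarrow> nat \<Rightarrow> (nat \<Rightarrow> real) \<Rightarrow> real" where
  "ord_stat n k x = rev (sort (map x [0..<n])) ! (k - 1)"

end

theory Submission
  imports Defs
begin


lemma card_greater_sorted:
  fixes s :: "real list"
  assumes "sorted_wrt (<) s" "p < length s"
  shows "card {w \<in> set s. s!p < w} = length s - 1 - p"
proof -
  have "{w \<in> set s. s!p < w} = (\<lambda>q. s!q) ` {p<..<length s}"
  proof (intro set_eqI iffI)
    fix w assume "w \<in> {w \<in> set s. s!p < w}"
    then obtain q where q: "q < length s" "w = s!q" "s!p < w" by (auto simp: in_set_conv_nth)
    have "p < q"
    proof (rule ccontr)
      assume "\<not> p < q"
      then have "q \<le> p" by simp
      then have "s!q \<le> s!p" using assms q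
        by (metis order.order_iff_strict sorted_wrt_nth_less)
      then show False using q by simp
    qed
    then show "w \<in> (\<lambda>q. s!q) ` {p<..<length s}" using q by auto
  next
    fix w assume "w \<in> (\<lambda>q. s!q) ` {p<..<length s}"
    then obtain q where "p < q" "q < length s" "w = s!q" by auto
    then show "w \<in> {w \<in> set s. s!p < w}" using assms sorted_wrt_nth_less by fastforce
  qed
  moreover have "inj_on (\<lambda>q. s!q) {p<..<length s}"
    using assms(1) by (auto simp: inj_on_def strict_sorted_iff nth_eq_iff_index_eq)
  ultimately show ?thesis by (simp add: card_image)
qed

lemma ord_stat_facts:
  fixes z :: "nat \<Rightarrow> real"
  assumes inj: "inj_on z {0..<n}" and m: "1 \<le> m" "m \<le> n"
  defines "s \<equiv> sort (map z [0..<n])"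
  shows "ord_stat n m z = s ! (n - m)" "sorted_wrt (<) s" "length s = n"
    "set s = z ` {0..<n}"
proof -
  show ls: "length s = n" by (simp add: s_def)
  have "distinct (map z [0..<n])" using inj by (simp add: distinct_map)
  then show "sorted_wrt (<) s" unfolding s_def
    by (simp add: strict_sorted_iff)
  show "ord_stat n m z = s ! (n - m)" using m ls
    by (simp add: ord_stat_def s_def[symmetric] rev_nth)
  show "set s = z ` {0..<n}" by (simp add: s_def)
qed

lemma card_above_eq:
  fixes z :: "nat \<Rightarrow> real"
  assumes inj: "inj_on z {0..<n}"
  shows "card {j\<in>{0..<n}. v < z j} = card {w \<in> z ` {0..<n}. v < w}"
proof -
  have "{w \<in> z ` {0..<n}. v < w} = z ` {j\<in>{0..<n}. v < z j}" by auto
  moreover have "inj_on z {j\<in>{0..<n}. v < z j}" using inj by (rule inj_on_subset) auto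
  ultimately show ?thesis by (simp add: card_image)
qed

lemma ord_stat_exists:
  fixes z :: "nat \<Rightarrow> real"
  assumes inj: "inj_on z {0..<n}" and m: "1 \<le> m" "m \<le> n"
  shows "\<exists>i<n. card {j\<in>{0..<n}. z i < z j} = m - 1"
proof -
  define s where "s = sort (map z [0..<n])"
  note F = ord_stat_facts[OF inj m, folded s_def]
  have "s ! (n - m) \<in> z ` {0..<n}" using F m by (metis diff_less nth_mem zero_less_one less_le_trans)
  then obtain i where i: "i < n" "z i = s ! (n-m)" by auto
  have "card {j\<in>{0..<n}. z i < z j} = card {w \<in> set s. s!(n-m) < w}"
    using card_above_eq[OF inj] F i by simp
  also have "\<dots> = m - 1" using card_greater_sorted[OF F(2), of "n-m"] F m by simp
  finally show ?thesis using i by blast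
qed

lemma ord_stat_char:
  fixes z :: "nat \<Rightarrow> real"
  assumes inj: "inj_on z {0..<n}" and k: "2 \<le> k" "k \<le> n" and i: "i < n"
    and c: "card {j\<in>{0..<n}. z i < z j} = k - 1"
  shows "ord_stat n k z = z i"
    and "\<And>J. (\<forall>a b. a \<in> J \<longrightarrow> a \<le> b \<longrightarrow> b \<in> J) \<Longrightarrow>
         (ord_stat n (k-1) z - ord_stat n k z \<in> J \<longleftrightarrow> (\<forall>j<n. z i < z j \<longrightarrow> z j - z i \<in> J))"
proof -
  define s where "s = sort (map z [0..<n])"
  have k1: "1 \<le> k" using k by simp
  note F = ord_stat_facts[OF inj k1 k(2), folded s_def]
  have "z i \<in> set s" using F i by auto
  then obtain p where p: "p < n" "s!p = z i" using F by (metis in_set_conv_nth)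
  have "card {w \<in> set s. s!p < w} = n - 1 - p" using card_greater_sorted[OF F(2), of p] p F(3) by simp
  moreover have "card {w \<in> set s. s!p < w} = k - 1"
    using card_above_eq[OF inj] c F p by simp
  ultimately have pn: "p = n - k" using k p by simp
  show os: "ord_stat n k z = z i" using F p pn by simp
  fix J :: "real set" assume up: "\<forall>a b. a \<in> J \<longrightarrow> a \<le> b \<longrightarrow> b \<in> J"
  have k2: "1 \<le> k - 1" "k - 1 \<le> n" using k by auto
  have os2: "ord_stat n (k-1) z = s ! (n-k+1)"
    using ord_stat_facts(1)[OF inj k2, folded s_def] k by (simp add: Suc_diff_le)
  have lt: "s ! (n-k) < s ! (n-k+1)"
    by (rule sorted_wrt_nth_less[OF F(2)]) (use F(3) k in auto)
  have "n-k+1 < length s" using F(3) k by simp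
  then have U_in: "s ! (n-k+1) \<in> z ` {0..<n}" using F(4) nth_mem by blast
  show "ord_stat n (k-1) z - ord_stat n k z \<in> J \<longleftrightarrow> (\<forall>j<n. z i < z j \<longrightarrow> z j - z i \<in> J)"
  proof
    assume A: "ord_stat n (k-1) z - ord_stat n k z \<in> J"
    show "\<forall>j<n. z i < z j \<longrightarrow> z j - z i \<in> J"
    proof (intro allI impI)
      fix j assume j: "j < n" "z i < z j"
      then have "z j \<in> set s" using F by auto
      then obtain q where q: "q < n" "s!q = z j" using F(3) by (metis in_set_conv_nth)
      have "n - k < q"
      proof (rule ccontr)
        assume "\<not> n - k < q"
        then have "q \<le> n - k" by simp
        have "n - k < length s" using F(3) k by simp
        then have "s!q \<le> s!(n-k)" using \<open>q \<le> n - k\<close> F(2)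
          by (metis order.order_iff_strict sorted_wrt_nth_less)
        then show False using j q p pn by simp
      qed
      then have "n-k+1 \<le> q" by simp
      then have "s!(n-k+1) \<le> s!q" using F(2,3) q
        by (metis order.order_iff_strict sorted_wrt_nth_less)
      then have "ord_stat n (k-1) z - ord_stat n k z \<le> z j - z i" using os os2 q by simp
      then show "z j - z i \<in> J" using up A by blast
    qed
  next
    assume B: "\<forall>j<n. z i < z j \<longrightarrow> z j - z i \<in> J"
    obtain j where "j < n" "z j = s ! (n-k+1)" using U_in by auto
    then show "ord_stat n (k-1) z - ord_stat n k z \<in> J" using B os os2 lt p pn by auto
  qed
qed


context
  fixes f :: "real \<Rightarrow> real"
  assumes ihr: "IHR_density f"
begin

lemma f_meas[measurable]: "f \<in> borel_measurable borel"
  using ihr by (simp add: IHR_density_def)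

lemma f_nonneg: "0 \<le> f x" using ihr by (simp add: IHR_density_def)
lemma f_neg: "x < 0 \<Longrightarrow> f x = 0" using ihr by (simp add: IHR_density_def)
lemma f_int: "integrable lborel f" using ihr by (simp add: IHR_density_def)
lemma f_tot: "(LINT t|lborel. f t) = 1" using ihr by (simp add: IHR_density_def)
lemma F_lt1: "cdf_of_density f x < 1" using ihr by (simp add: IHR_density_def)
lemma h_mono: "mono_on {0..} (hazard f)" using ihr by (simp add: IHR_density_def)

definition "NN = density lborel (\<lambda>x. ennreal (f x))"

lemma sets_NN[simp, measurable_cong]: "sets NN = sets borel"
  by (simp add: NN_def)

lemma space_NN[simp]: "space NN = UNIV"
  by (simp add: NN_def)

lemma emeasure_NN: "A \<in> sets borel \<Longrightarrow> emeasure NN A = ennreal (LINT t:A|lborel. f t)"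
proof -
  assume A: "A \<in> sets borel"
  have "emeasure NN A = (\<integral>\<^sup>+ t. ennreal (f t) * indicator A t \<partial>lborel)"
    unfolding NN_def using A by (subst emeasure_density) auto
  also have "\<dots> = (\<integral>\<^sup>+ t. ennreal (indicator A t *\<^sub>R f t) \<partial>lborel)"
    by (intro nn_integral_cong) (auto simp: indicator_def)
  also have "\<dots> = ennreal (LINT t:A|lborel. f t)"
    unfolding set_lebesgue_integral_def
    using A f_int f_nonneg integrable_real_mult_indicator[of A lborel f] A f_int
    by (intro nn_integral_eq_integral) (auto simp: mult.commute)
  finally show ?thesis .
qed

lemma set_int_nonneg: "0 \<le> (LINT t:A|lborel. f t)"
  unfolding set_lebesgue_integral_def using f_nonneg
  by (intro Bochner_Integration.integral_nonneg) (auto simp: indicator_def)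

lemma measure_NN: "A \<in> sets borel \<Longrightarrow> measure NN A = (LINT t:A|lborel. f t)"
  using emeasure_NN set_int_nonneg unfolding measure_def by simp

lemma NN_prob: "prob_space NN"
proof
  have "emeasure NN UNIV = ennreal (LINT t:UNIV|lborel. f t)" by (rule emeasure_NN) simp
  then show "emeasure NN (space NN) = 1" using f_tot by (simp add: set_lebesgue_integral_def)
qed

lemma NN_real: "real_distribution NN"
  using NN_prob by (simp add: real_distribution_def real_distribution_axioms_def)

lemma F_eq: "cdf_of_density f x = measure NN {..x}"
  by (simp add: cdf_of_density_def measure_NN)

lemma F_cdf: "cdf_of_density f = cdf NN"
  by (auto simp: F_eq cdf_def)

lemma NN_single: "measure NN {x} = 0"
proof -
  have "emeasure NN {x} = (\<integral>\<^sup>+ t. ennreal (f t) * indicator {x} t \<partial>lborel)"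
    unfolding NN_def by (subst emeasure_density) auto
  also have "\<dots> = 0" by simp
  finally show ?thesis by (simp add: measure_def)
qed

lemma F_cont: "isCont (cdf_of_density f) x"
  unfolding F_cdf using finite_borel_measure.isCont_cdf[OF real_distribution.finite_borel_measure_M[OF NN_real]] NN_single by simp

definition "GG x = 1 - cdf_of_density f x"

lemma GG_pos: "0 < GG x" using F_lt1 by (simp add: GG_def)

lemma GG_eq: "GG x = measure NN {x<..}"
proof -
  interpret prob_space NN by (rule NN_prob)
  have "measure NN {x<..} = 1 - measure NN {..x}"
    by (subst prob_compl[symmetric]) (auto intro!: arg_cong[where f="measure NN"])
  then show ?thesis by (simp add: GG_def F_eq)
qed

lemma GG_eq2: "GG x = measure NN {x..}"
proof -
  interpret prob_space NN by (rule NN_prob)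
  have "measure NN {x..} = measure NN {x<..} + measure NN {x}"
    by (subst finite_measure_Union[symmetric]) (auto intro!: arg_cong[where f="measure NN"])
  then show ?thesis using NN_single GG_eq by simp
qed

lemma GG_cont: "continuous_on A GG"
  unfolding GG_def using F_cont by (intro continuous_at_imp_continuous_on) (auto intro!: continuous_intros)

lemma GG_diff: "a \<le> b \<Longrightarrow> GG a - GG b = measure NN {a<..b}"
proof -
  assume ab: "a \<le> b"
  interpret prob_space NN by (rule NN_prob)
  have "measure NN {a<..} = measure NN {a<..b} + measure NN {b<..}"
    using ab by (subst finite_measure_Union[symmetric]) (auto intro!: arg_cong[where f="measure NN"])
  then show ?thesis by (simp add: GG_eq)
qed

lemma f_hazard: "f t = hazard f t * GG t"
  using GG_pos[of t] by (simp add: hazard_def GG_def)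

lemma hazard_nonneg: "0 \<le> hazard f t"
  using GG_pos[of t] f_nonneg[of t] by (simp add: hazard_def GG_def)

lemma emeasure_NN_nn: "A \<in> sets borel \<Longrightarrow> emeasure NN A = (\<integral>\<^sup>+ t. ennreal (f t) * indicator A t \<partial>lborel)"
  unfolding NN_def by (subst emeasure_density) auto

lemma shift_Ioc: "emeasure NN {x+a<..x+b} = (\<integral>\<^sup>+ u. ennreal (f (x + u)) * indicator {a<..b} u \<partial>lborel)"
proof -
  have "emeasure NN {x+a<..x+b} = (\<integral>\<^sup>+ t. ennreal (f t) * indicator {x+a<..x+b} t \<partial>lborel)"
    by (rule emeasure_NN_nn) simp
  also have "\<dots> = (\<integral>\<^sup>+ u. ennreal (f (x + 1 * u)) * indicator {x+a<..x+b} (x + 1 * u) \<partial>lborel)"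
    using nn_integral_real_affine[of "\<lambda>t. ennreal (f t) * indicator {x+a<..x+b} t" 1 x] by simp
  also have "\<dots> = (\<integral>\<^sup>+ u. ennreal (f (x + u)) * indicator {a<..b} u \<partial>lborel)"
    by (intro nn_integral_cong) (auto simp: indicator_def)
  finally show ?thesis .
qed

lemma ihr_key:
  assumes x: "0 \<le> x" "x \<le> y" and d: "0 \<le> d"
  shows "GG (y + d) * GG x \<le> GG (x + d) * GG y"
proof (rule ccontr)
  define V where "V u = GG (y + u) * GG x - GG (x + u) * GG y" for u
  assume "\<not> ?thesis"
  then have Vd: "V d > 0" by (simp add: V_def)
  have Vc: "continuous_on {0..d} V" unfolding V_def
    by (intro continuous_intros continuous_on_compose2[OF GG_cont]) auto
  define S where "S = {0..d} \<inter> V -` {..0}"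
  have clS: "closed S" unfolding S_def
    by (rule continuous_closed_preimage[OF Vc]) auto
  have V0: "V 0 = 0" by (simp add: V_def)
  have S0: "0 \<in> S" using d V0 by (simp add: S_def)
  have bS: "bdd_above S" by (auto simp: S_def bdd_above_def)
  define t1 where "t1 = Sup S"
  have t1S: "t1 \<in> S" unfolding t1_def using clS S0 bS by (intro closed_contains_Sup) auto
  then have t1: "0 \<le> t1" "t1 \<le> d" "V t1 \<le> 0" by (auto simp: S_def)
  have pos: "V u > 0" if "t1 < u" "u \<le> d" for u
  proof (rule ccontr)
    assume "\<not> V u > 0"
    then have "u \<in> S" using that t1 by (auto simp: S_def)
    then have "u \<le> t1" unfolding t1_def using bS by (rule cSup_upper)
    then show False using that by simp
  qed
  interpret NNp: prob_space NN by (rule NN_prob)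
  have "ennreal (GG y) * emeasure NN {x+t1<..x+d} \<le> ennreal (GG x) * emeasure NN {y+t1<..y+d}"
  proof -
    have "ennreal (GG y) * emeasure NN {x+t1<..x+d}
        = (\<integral>\<^sup>+ u. ennreal (GG y) * (ennreal (f (x + u)) * indicator {t1<..d} u) \<partial>lborel)"
      unfolding shift_Ioc by (rule nn_integral_cmult[symmetric]) auto
    also have "\<dots> \<le> (\<integral>\<^sup>+ u. ennreal (GG x) * (ennreal (f (y + u)) * indicator {t1<..d} u) \<partial>lborel)"
    proof (intro nn_integral_mono)
      fix u
      show "ennreal (GG y) * (ennreal (f (x + u)) * indicator {t1<..d} u)
          \<le> ennreal (GG x) * (ennreal (f (y + u)) * indicator {t1<..d} u)"
      proof (cases "u \<in> {t1<..d}")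
        case True
        then have u: "t1 < u" "u \<le> d" by auto
        have Vu: "GG (x + u) * GG y < GG (y + u) * GG x" using pos[OF u] by (simp add: V_def)
        have hm: "hazard f (x + u) \<le> hazard f (y + u)"
          using h_mono x u t1 by (intro mono_onD[OF h_mono]) auto
        have h0: "0 \<le> hazard f (x + u)" by (rule hazard_nonneg)
        have "GG y * f (x + u) = hazard f (x + u) * (GG (x + u) * GG y)"
          by (subst f_hazard) (simp add: algebra_simps)
        also have "\<dots> \<le> hazard f (x + u) * (GG (y + u) * GG x)"
          using Vu h0 by (intro mult_left_mono) auto
        also have "\<dots> \<le> hazard f (y + u) * (GG (y + u) * GG x)"
          using hm GG_pos[of "y+u"] GG_pos[of x] by (intro mult_right_mono) auto
        also have "\<dots> = GG x * f (y + u)"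
          using f_hazard[of "y+u"] by (simp add: algebra_simps)
        finally have "GG y * f (x + u) \<le> GG x * f (y + u)" .
        then show ?thesis using True GG_pos[of x] GG_pos[of y] f_nonneg
          by (simp add: ennreal_mult[symmetric])
      qed simp
    qed
    also have "\<dots> = ennreal (GG x) * emeasure NN {y+t1<..y+d}"
      unfolding shift_Ioc by (rule nn_integral_cmult) auto
    finally show ?thesis .
  qed
  then have "GG y * measure NN {x+t1<..x+d} \<le> GG x * measure NN {y+t1<..y+d}"
    using GG_pos[of x] GG_pos[of y]
    by (simp add: NNp.emeasure_eq_measure ennreal_mult[symmetric])
  moreover have "measure NN {x+t1<..x+d} = GG (x + t1) - GG (x + d)"
    using t1 by (subst GG_diff) auto
  moreover have "measure NN {y+t1<..y+d} = GG (y + t1) - GG (y + d)"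
    using t1 by (subst GG_diff) auto
  ultimately have "GG y * (GG (x + t1) - GG (x + d)) \<le> GG x * (GG (y + t1) - GG (y + d))"
    by simp
  then have "V d \<le> V t1" unfolding V_def by (simp add: right_diff_distrib algebra_simps)
  then show False using Vd t1 by simp
qed

end


context
  fixes f :: "real \<Rightarrow> real"
  assumes ihr: "IHR_density f"
begin

lemma NNsf: "product_sigma_finite (\<lambda>_::nat. NN f)"
  unfolding product_sigma_finite_def
  using prob_space_imp_sigma_finite[OF NN_prob[OF ihr]] by simp

lemma comp_meas: "j \<in> I \<Longrightarrow> (\<lambda>z. z j) \<in> borel_measurable (PiM I (\<lambda>_. NN f))"
  using measurable_component_singleton[of j I "\<lambda>_. NN f"]
  unfolding measurable_cong_sets[OF refl sets_NN[OF ihr]] .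

lemma pivot:
  fixes a :: "real \<Rightarrow> ennreal" and \<psi> :: "nat \<Rightarrow> real \<Rightarrow> real \<Rightarrow> ennreal"
  assumes i: "i < n"
    and am[measurable]: "a \<in> borel_measurable borel"
    and psim[measurable]: "\<And>j. (\<lambda>p. \<psi> j (fst p) (snd p)) \<in> borel_measurable (borel \<Otimes>\<^sub>M borel)"
  shows "(\<integral>\<^sup>+ z. a (z i) * (\<Prod>j\<in>{0..<n}-{i}. \<psi> j (z i) (z j)) \<partial>(PiM {0..<n} (\<lambda>_. NN f)))
       = (\<integral>\<^sup>+ y. ennreal (f y) * (a y * (\<Prod>j\<in>{0..<n}-{i}. \<integral>\<^sup>+ t. \<psi> j y t \<partial>NN f)) \<partial>lborel)"
proof -
  interpret product_sigma_finite "\<lambda>_::nat. NN f" by (rule NNsf)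
  let ?K = "{0..<n}-{i}"
  have ins: "insert i ?K = {0..<n}" using i by auto
  have psi2: "\<psi> j y \<in> borel_measurable borel" for j y
    using measurable_Pair2[OF psim[of j], of y] by simp
  have gm: "(\<lambda>z. a (z i) * (\<Prod>j\<in>?K. \<psi> j (z i) (z j))) \<in> borel_measurable (PiM (insert i ?K) (\<lambda>_. NN f))"
  proof -
    have "(\<lambda>z. \<psi> j (z i) (z j)) \<in> borel_measurable (PiM (insert i ?K) (\<lambda>_. NN f))" if "j \<in> ?K" for j
    proof -
      have "(\<lambda>z. (z i, z j)) \<in> measurable (PiM (insert i ?K) (\<lambda>_. NN f)) (borel \<Otimes>\<^sub>M borel)"
        by (rule measurable_Pair; rule comp_meas) (use that in auto)
      from measurable_comp[OF this psim[of j]] show ?thesis by (simp add: comp_def)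
    qed
    moreover have "(\<lambda>z. a (z i)) \<in> borel_measurable (PiM (insert i ?K) (\<lambda>_. NN f))"
      using measurable_comp[OF comp_meas[of i "insert i ?K"] am] by (simp add: comp_def)
    ultimately show ?thesis
      by (intro borel_measurable_times_ennreal borel_measurable_prod_ennreal; assumption?) simp
  qed
  have "(\<integral>\<^sup>+ z. a (z i) * (\<Prod>j\<in>?K. \<psi> j (z i) (z j)) \<partial>(PiM (insert i ?K) (\<lambda>_. NN f)))
     = (\<integral>\<^sup>+ y. (\<integral>\<^sup>+ x. a ((x(i:=y)) i) * (\<Prod>j\<in>?K. \<psi> j ((x(i:=y)) i) ((x(i:=y)) j)) \<partial>(PiM ?K (\<lambda>_. NN f))) \<partial>NN f)"
    by (rule product_nn_integral_insert_rev[OF _ _ gm]) auto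
  also have "\<dots> = (\<integral>\<^sup>+ y. a y * (\<integral>\<^sup>+ x. (\<Prod>j\<in>?K. \<psi> j y (x j)) \<partial>(PiM ?K (\<lambda>_. NN f))) \<partial>NN f)"
  proof (intro nn_integral_cong)
    fix y
    have "(\<integral>\<^sup>+ x. a ((x(i:=y)) i) * (\<Prod>j\<in>?K. \<psi> j ((x(i:=y)) i) ((x(i:=y)) j)) \<partial>(PiM ?K (\<lambda>_. NN f)))
        = (\<integral>\<^sup>+ x. a y * (\<Prod>j\<in>?K. \<psi> j y (x j)) \<partial>(PiM ?K (\<lambda>_. NN f)))"
      by (intro nn_integral_cong) (auto intro!: prod.cong)
    also have "\<dots> = a y * (\<integral>\<^sup>+ x. (\<Prod>j\<in>?K. \<psi> j y (x j)) \<partial>(PiM ?K (\<lambda>_. NN f)))"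
    proof (rule nn_integral_cmult)
      have "(\<lambda>x. \<psi> j y (x j)) \<in> borel_measurable (PiM ?K (\<lambda>_. NN f))" if "j \<in> ?K" for j
        using measurable_comp[OF comp_meas[OF that] psi2[of j y]]
        by (simp add: comp_def)
      then show "(\<lambda>x. \<Prod>j\<in>?K. \<psi> j y (x j)) \<in> borel_measurable (PiM ?K (\<lambda>_. NN f))"
        by (intro borel_measurable_prod_ennreal) auto
    qed
    finally show "(\<integral>\<^sup>+ x. a ((x(i:=y)) i) * (\<Prod>j\<in>?K. \<psi> j ((x(i:=y)) i) ((x(i:=y)) j)) \<partial>(PiM ?K (\<lambda>_. NN f)))
        = a y * (\<integral>\<^sup>+ x. (\<Prod>j\<in>?K. \<psi> j y (x j)) \<partial>(PiM ?K (\<lambda>_. NN f)))" .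
  qed
  also have "\<dots> = (\<integral>\<^sup>+ y. a y * (\<Prod>j\<in>?K. \<integral>\<^sup>+ t. \<psi> j y t \<partial>NN f) \<partial>NN f)"
  proof (intro nn_integral_cong arg_cong2[where f="(*)"] refl product_nn_integral_prod)
    fix y j show "\<psi> j y \<in> borel_measurable (NN f)"
      using psi2[of j y] unfolding measurable_cong_sets[OF sets_NN[OF ihr] refl] .
  qed simp
  also have "\<dots> = (\<integral>\<^sup>+ y. ennreal (f y) * (a y * (\<Prod>j\<in>?K. \<integral>\<^sup>+ t. \<psi> j y t \<partial>NN f)) \<partial>lborel)"
  proof -
    have "(\<lambda>y. \<integral>\<^sup>+ t. \<psi> j y t \<partial>NN f) \<in> borel_measurable borel" for j
    proof (rule sigma_finite_measure.borel_measurable_nn_integral[OF prob_space_imp_sigma_finite[OF NN_prob[OF ihr]]])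
      show "case_prod (\<psi> j) \<in> borel_measurable (borel \<Otimes>\<^sub>M NN f)"
        using psim[of j] by (simp add: measurable_cong_sets[OF sets_pair_measure_cong[OF refl sets_NN[OF ihr]] refl] case_prod_beta')
    qed
    then have m: "(\<lambda>y. a y * (\<Prod>j\<in>?K. \<integral>\<^sup>+ t. \<psi> j y t \<partial>NN f)) \<in> borel_measurable lborel"
      by (intro borel_measurable_times_ennreal borel_measurable_prod_ennreal) (simp_all add: am)
    have fm: "(\<lambda>x. ennreal (f x)) \<in> borel_measurable lborel" using f_meas[OF ihr] by simp
    show ?thesis using nn_integral_density[OF fm m, folded NN_def[OF ihr]] .
  qed
  finally show ?thesis unfolding ins .
qed

end


lemma prod_of_bool_ennreal:
  "finite K \<Longrightarrow> (\<Prod>j\<in>K. (if P j then (1::ennreal) else 0)) = (if \<forall>j\<in>K. P j then 1 else 0)"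
  by (induction K rule: finite_induct) auto

context
  fixes f :: "real \<Rightarrow> real"
  assumes ihr: "IHR_density f"
begin

definition "GJ J x = emeasure (NN f) {t. x < t \<and> t - x \<in> J}"
definition "Fe x = emeasure (NN f) {..x}"

lemma pair_pred: fixes i j n :: nat shows "i < n \<Longrightarrow> j < n \<Longrightarrow> W \<in> sets (borel \<Otimes>\<^sub>M borel) \<Longrightarrow>
  Measurable.pred (PiM {0..<n} (\<lambda>_. NN f)) (\<lambda>z. (z i, z j) \<in> W)"
  by (rule pred_sets2[OF _ measurable_Pair[OF comp_meas[OF ihr] comp_meas[OF ihr]]]) auto

lemma one_pred: fixes i n :: nat shows "i < n \<Longrightarrow> A \<in> sets borel \<Longrightarrow>
  Measurable.pred (PiM {0..<n} (\<lambda>_. NN f)) (\<lambda>z. z i \<in> A)"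
  by (rule pred_sets2[OF _ comp_meas[OF ihr]]) auto

lemma Emeas:
  fixes A J :: "real set" and i n :: nat
  assumes i: "i < n" and T: "T \<subseteq> {0..<n}-{i}"
    and A[measurable]: "A \<in> sets borel" and J[measurable]: "J \<in> sets borel"
  shows "emeasure (PiM {0..<n} (\<lambda>_. NN f))
           {z \<in> space (PiM {0..<n} (\<lambda>_. NN f)). z i \<in> A \<and> (\<forall>j\<in>T. z i < z j \<and> z j - z i \<in> J) \<and> (\<forall>j\<in>{0..<n}-{i}-T. z j \<le> z i)}
       = (\<integral>\<^sup>+ y. ennreal (f y) * (indicator A y * (GJ J y ^ card T * Fe y ^ card ({0..<n}-{i}-T))) \<partial>lborel)"
proof -
  note sets_NN[OF ihr, measurable_cong]
  let ?P = "PiM {0..<n} (\<lambda>_. NN f)"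
  let ?K = "{0..<n}-{i}"
  define \<psi> where "\<psi> j x t = (if j \<in> T then (if x < t \<and> t - x \<in> J then 1 else 0)
                                   else (if t \<le> x then 1 else (0::ennreal)))" for j x t
  define E where "E = {z \<in> space ?P. z i \<in> A \<and> (\<forall>j\<in>T. z i < z j \<and> z j - z i \<in> J) \<and> (\<forall>j\<in>{0..<n}-{i}-T. z j \<le> z i)}"
  have fT: "finite T" using T finite_subset by blast
  define W1 where "W1 = {p::real\<times>real. fst p < snd p \<and> snd p - fst p \<in> J}"
  define W2 where "W2 = {p::real\<times>real. snd p \<le> fst p}"
  have "Measurable.pred (borel \<Otimes>\<^sub>M borel) (\<lambda>p::real\<times>real. fst p < snd p \<and> snd p - fst p \<in> J)"
    by measurable
  from predE[OF this] have W1m: "W1 \<in> sets (borel \<Otimes>\<^sub>M borel)" unfolding W1_def by (simp add: space_pair_measure)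
  have "Measurable.pred (borel \<Otimes>\<^sub>M borel) (\<lambda>p::real\<times>real. snd p \<le> fst p)"
    by measurable
  from predE[OF this] have W2m: "W2 \<in> sets (borel \<Otimes>\<^sub>M borel)" unfolding W2_def by (simp add: space_pair_measure)
  note W = W1m W2m
  have "Measurable.pred ?P (\<lambda>z. z i \<in> A \<and> (\<forall>j\<in>T. (z i, z j) \<in> W1) \<and> (\<forall>j\<in>{0..<n}-{i}-T. (z i, z j) \<in> W2))"
    using fT T i W by (intro pred_intros_logic(3) pred_intros_finite(3) one_pred pair_pred) auto
  from predE[OF this] have Em: "E \<in> sets ?P" unfolding E_def W1_def W2_def by simp
  have psim: "(\<lambda>p. \<psi> j (fst p) (snd p)) \<in> borel_measurable (borel \<Otimes>\<^sub>M borel)" for j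
    unfolding \<psi>_def by measurable
  have "emeasure ?P E = (\<integral>\<^sup>+ z. indicator E z \<partial>?P)" using Em by simp
  also have "\<dots> = (\<integral>\<^sup>+ z. indicator A (z i) * (\<Prod>j\<in>?K. \<psi> j (z i) (z j)) \<partial>?P)"
  proof (intro nn_integral_cong)
    fix z assume z: "z \<in> space ?P"
    have "(\<Prod>j\<in>?K. \<psi> j (z i) (z j)) = (\<Prod>j\<in>?K. (if (if j \<in> T then z i < z j \<and> z j - z i \<in> J else z j \<le> z i) then 1 else 0))"
      by (intro prod.cong) (auto simp: \<psi>_def)
    also have "\<dots> = (if \<forall>j\<in>?K. (if j \<in> T then z i < z j \<and> z j - z i \<in> J else z j \<le> z i) then 1 else 0)"
      by (rule prod_of_bool_ennreal) simp
    finally show "indicator E z = indicator A (z i) * (\<Prod>j\<in>?K. \<psi> j (z i) (z j))"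
      using z T unfolding E_def by (auto simp: indicator_def)
  qed
  also have "\<dots> = (\<integral>\<^sup>+ y. ennreal (f y) * (indicator A y * (\<Prod>j\<in>?K. \<integral>\<^sup>+ t. \<psi> j y t \<partial>NN f)) \<partial>lborel)"
    by (rule pivot[OF ihr i _ psim]) simp
  also have "\<dots> = (\<integral>\<^sup>+ y. ennreal (f y) * (indicator A y * (GJ J y ^ card T * Fe y ^ card ({0..<n}-{i}-T))) \<partial>lborel)"
  proof (intro nn_integral_cong arg_cong2[where f="(*)"] refl)
    fix y
    have int: "(\<integral>\<^sup>+ t. \<psi> j y t \<partial>NN f) = (if j \<in> T then GJ J y else Fe y)" for j
    proof -
      have s1: "{t. y < t \<and> t - y \<in> J} \<in> sets (NN f)" by measurable
      have s2: "{..y} \<in> sets (NN f)" by simp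
      show ?thesis
      proof (cases "j \<in> T")
        case True
        then have "(\<integral>\<^sup>+ t. \<psi> j y t \<partial>NN f) = (\<integral>\<^sup>+ t. indicator {t. y < t \<and> t - y \<in> J} t \<partial>NN f)"
          by (intro nn_integral_cong) (auto simp: \<psi>_def indicator_def)
        then show ?thesis using True s1 by (simp add: GJ_def)
      next
        case False
        then have "(\<integral>\<^sup>+ t. \<psi> j y t \<partial>NN f) = (\<integral>\<^sup>+ t. indicator {..y} t \<partial>NN f)"
          by (intro nn_integral_cong) (auto simp: \<psi>_def indicator_def)
        then show ?thesis using False s2 by (simp add: Fe_def)
      qed
    qed
    have "(\<Prod>j\<in>?K. \<integral>\<^sup>+ t. \<psi> j y t \<partial>NN f) = (\<Prod>j\<in>?K. if j \<in> T then GJ J y else Fe y)"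
      by (intro prod.cong) (auto simp: int)
    also have "\<dots> = (\<Prod>j\<in>?K \<inter> {j. j \<in> T}. GJ J y) * (\<Prod>j\<in>?K \<inter> - {j. j \<in> T}. Fe y)"
      by (rule prod.If_cases) simp
    also have "?K \<inter> {j. j \<in> T} = T" using T by auto
    also have "?K \<inter> - {j. j \<in> T} = {0..<n}-{i}-T" by auto
    finally show "(\<Prod>j\<in>?K. \<integral>\<^sup>+ t. \<psi> j y t \<partial>NN f) = GJ J y ^ card T * Fe y ^ card ({0..<n}-{i}-T)"
      by simp
  qed
  finally show ?thesis unfolding E_def .
qed

lemma tie_null:
  fixes i j n :: nat
  assumes ij: "i < n" "j < n" "i \<noteq> j"
  shows "emeasure (PiM {0..<n} (\<lambda>_. NN f)) {z \<in> space (PiM {0..<n} (\<lambda>_. NN f)). z j = z i} = 0"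
proof -
  note sets_NN[OF ihr, measurable_cong]
  let ?P = "PiM {0..<n} (\<lambda>_. NN f)"
  let ?K = "{0..<n}-{i}"
  define \<psi> where "\<psi> j' (x::real) (t::real) = (if j' = j then (if t = x then 1 else (0::ennreal)) else 1)" for j' x t
  have psim: "(\<lambda>p. \<psi> j' (fst p) (snd p)) \<in> borel_measurable (borel \<Otimes>\<^sub>M borel)" for j'
    unfolding \<psi>_def by measurable
  have "closed {p::real\<times>real. snd p = fst p}"
    by (intro closed_Collect_eq continuous_intros)
  then have "{p::real\<times>real. snd p = fst p} \<in> sets borel" by (rule borel_closed)
  then have W: "{p::real\<times>real. snd p \<le> fst p \<and> fst p \<le> snd p} \<in> sets (borel \<Otimes>\<^sub>M borel)"
    unfolding borel_prod by (simp add: order_eq_iff[symmetric])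
  have "Measurable.pred ?P (\<lambda>z. (z i, z j) \<in> {p::real\<times>real. snd p \<le> fst p \<and> fst p \<le> snd p})"
    by (rule pair_pred[OF ij(1) ij(2) W])
  from predE[OF this] have Em0: "{z \<in> space ?P. (z i, z j) \<in> {p::real\<times>real. snd p \<le> fst p \<and> fst p \<le> snd p}} \<in> sets ?P" .
  have "{z \<in> space ?P. (z i, z j) \<in> {p::real\<times>real. snd p \<le> fst p \<and> fst p \<le> snd p}} = {z \<in> space ?P. z j = z i}"
    by auto
  with Em0 have Em: "{z \<in> space ?P. z j = z i} \<in> sets ?P" by simp
  have "emeasure ?P {z \<in> space ?P. z j = z i} = (\<integral>\<^sup>+ z. indicator {z \<in> space ?P. z j = z i} z \<partial>?P)"
    using Em by simp
  also have "\<dots> = (\<integral>\<^sup>+ z. (\<lambda>_. 1) (z i) * (\<Prod>j'\<in>?K. \<psi> j' (z i) (z j')) \<partial>?P)"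
  proof (intro nn_integral_cong)
    fix z assume z: "z \<in> space ?P"
    have "(\<Prod>j'\<in>?K. \<psi> j' (z i) (z j')) = (if j \<in> ?K then (if z j = z i then 1 else 0) else 1)"
      unfolding \<psi>_def by (rule prod.delta) simp
    then show "indicator {z \<in> space ?P. z j = z i} z = (\<lambda>_. 1) (z i) * (\<Prod>j'\<in>?K. \<psi> j' (z i) (z j'))"
      using z ij by (simp add: indicator_def)
  qed
  also have "\<dots> = (\<integral>\<^sup>+ y. ennreal (f y) * ((\<lambda>_. 1) y * (\<Prod>j'\<in>?K. \<integral>\<^sup>+ t. \<psi> j' y t \<partial>NN f)) \<partial>lborel)"
    by (rule pivot[OF ihr ij(1) _ psim]) simp
  also have "\<dots> = (\<integral>\<^sup>+ (y::real). 0 \<partial>lborel)"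
  proof (intro nn_integral_cong)
    fix y
    have "(\<integral>\<^sup>+ t. \<psi> j y t \<partial>NN f) = (\<integral>\<^sup>+ t. indicator {y} t \<partial>NN f)"
      by (intro nn_integral_cong) (auto simp: \<psi>_def indicator_def)
    also have "\<dots> = emeasure (NN f) {y}" by simp
    also have "\<dots> = 0" using NN_single[OF ihr, of y] finite_measure.emeasure_eq_measure[OF prob_space.finite_measure[OF NN_prob[OF ihr]]] by simp
    finally have "(\<integral>\<^sup>+ t. \<psi> j y t \<partial>NN f) = 0" .
    moreover have "j \<in> ?K" using ij by auto
    ultimately have "(\<Prod>j'\<in>?K. \<integral>\<^sup>+ t. \<psi> j' y t \<partial>NN f) = 0"
      by (intro prod_zero) auto
    then show "ennreal (f y) * ((\<lambda>_. 1) y * (\<Prod>j'\<in>?K. \<integral>\<^sup>+ t. \<psi> j' y t \<partial>NN f)) = 0" by simp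
  qed
  finally show ?thesis by simp
qed

end


lemma count_lemma:
  fixes z :: "nat \<Rightarrow> real" and A J :: "real set"
  assumes inj: "inj_on z {0..<n}" and k: "2 \<le> k" "k \<le> n"
    and up: "\<forall>a b. a \<in> J \<longrightarrow> a \<le> b \<longrightarrow> b \<in> J"
  shows "card {(i,T). (i < n \<and> T \<subseteq> {0..<n}-{i} \<and> card T = k - 1) \<and>
            (z i \<in> A \<and> (\<forall>j\<in>T. z i < z j \<and> z j - z i \<in> J) \<and> (\<forall>j\<in>{0..<n}-{i}-T. z j \<le> z i))}
       = (if ord_stat n k z \<in> A \<and> ord_stat n (k-1) z - ord_stat n k z \<in> J then 1 else 0)"
proof -
  obtain i0 where i0: "i0 < n" "card {j\<in>{0..<n}. z i0 < z j} = k - 1"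
    using ord_stat_exists[OF inj, of k] k by auto
  define T0 where "T0 = {j\<in>{0..<n}. z i0 < z j}"
  note ch = ord_stat_char[OF inj k i0]
  let ?Q = "\<lambda>(i,T). (i < n \<and> T \<subseteq> {0..<n}-{i} \<and> card T = k - 1) \<and>
            (z i \<in> A \<and> (\<forall>j\<in>T. z i < z j \<and> z j - z i \<in> J) \<and> (\<forall>j\<in>{0..<n}-{i}-T. z j \<le> z i))"
  let ?C = "ord_stat n k z \<in> A \<and> ord_stat n (k-1) z - ord_stat n k z \<in> J"
  have "{(i,T). (i < n \<and> T \<subseteq> {0..<n}-{i} \<and> card T = k - 1) \<and>
            (z i \<in> A \<and> (\<forall>j\<in>T. z i < z j \<and> z j - z i \<in> J) \<and> (\<forall>j\<in>{0..<n}-{i}-T. z j \<le> z i))}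
        = (if ?C then {(i0,T0)} else {})"
  proof (intro set_eqI iffI)
    fix x assume x: "x \<in> {(i,T). (i < n \<and> T \<subseteq> {0..<n}-{i} \<and> card T = k - 1) \<and>
            (z i \<in> A \<and> (\<forall>j\<in>T. z i < z j \<and> z j - z i \<in> J) \<and> (\<forall>j\<in>{0..<n}-{i}-T. z j \<le> z i))}"
    obtain i T where xe: "x = (i,T)" by (cases x)
    with x have i: "i < n" and T: "T \<subseteq> {0..<n}-{i}" "card T = k - 1" and zA: "z i \<in> A"
      and Tup: "\<forall>j\<in>T. z i < z j \<and> z j - z i \<in> J" and Tlow: "\<forall>j\<in>{0..<n}-{i}-T. z j \<le> z i" by auto
    have Teq: "T = {j\<in>{0..<n}. z i < z j}"
    proof (intro set_eqI iffI)
      fix j assume "j \<in> T" then show "j \<in> {j\<in>{0..<n}. z i < z j}" using T Tup by auto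
    next
      fix j assume j: "j \<in> {j\<in>{0..<n}. z i < z j}"
      show "j \<in> T"
      proof (rule ccontr)
        assume "j \<notin> T"
        moreover have "j \<noteq> i" using j by auto
        ultimately have "z j \<le> z i" using Tlow j by auto
        then show False using j by auto
      qed
    qed
    have ci: "card {j\<in>{0..<n}. z i < z j} = k - 1" using T Teq by simp
    have "z i = z i0" using ord_stat_char(1)[OF inj k i ci] ch(1) by simp
    then have ii0: "i = i0" using inj i i0 by (auto dest: inj_onD)
    then have TT0: "T = T0" using Teq T0_def by simp
    have C: ?C
    proof
      show "ord_stat n k z \<in> A" using ch(1) zA ii0 by simp
      show "ord_stat n (k-1) z - ord_stat n k z \<in> J"
        using ch(2)[OF up] Tup TT0 ii0 T0_def by auto
    qed
    show "x \<in> (if ?C then {(i0,T0)} else {})" using C xe ii0 TT0 by simp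
  next
    fix x assume x: "x \<in> (if ?C then {(i0,T0)} else {})"
    then have C: ?C and xe: "x = (i0,T0)" by (auto split: if_splits)
    have "T0 \<subseteq> {0..<n}-{i0}" by (auto simp: T0_def)
    moreover have "card T0 = k - 1" using i0 T0_def by simp
    moreover have "z i0 \<in> A" using C ch(1) by simp
    moreover have "\<forall>j\<in>T0. z i0 < z j \<and> z j - z i0 \<in> J"
      using C ch(2)[OF up] by (auto simp: T0_def)
    moreover have "\<forall>j\<in>{0..<n}-{i0}-T0. z j \<le> z i0" by (auto simp: T0_def)
    ultimately show "x \<in> {(i,T). (i < n \<and> T \<subseteq> {0..<n}-{i} \<and> card T = k - 1) \<and>
            (z i \<in> A \<and> (\<forall>j\<in>T. z i < z j \<and> z j - z i \<in> J) \<and> (\<forall>j\<in>{0..<n}-{i}-T. z j \<le> z i))}"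
      using xe i0 by simp
  qed
  then show ?thesis by simp
qed


definition Ixs :: "nat \<Rightarrow> nat \<Rightarrow> (nat \<times> nat set) set" where "Ixs n k = {(i,T). i < n \<and> T \<subseteq> {0..<n}-{i} \<and> card T = k - 1}"

definition "beta f n k A J = (\<integral>\<^sup>+ y. ennreal (f y) * (indicator A y * (GJ f J y ^ (k-1) * Fe f y ^ (n-k))) \<partial>lborel)"

lemma finite_Ixs: "finite (Ixs n k)"
proof -
  have "Ixs n k \<subseteq> {0..<n} \<times> Pow {0..<n}" by (auto simp: Ixs_def)
  then show ?thesis by (rule finite_subset) auto
qed

context
  fixes f :: "real \<Rightarrow> real"
  assumes ihr: "IHR_density f"
begin

lemma E_sets:
  fixes A J :: "real set" and i n :: nat
  assumes i: "i < n" and T: "T \<subseteq> {0..<n}-{i}"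
    and A: "A \<in> sets borel" and J: "J \<in> sets borel"
  shows "{z \<in> space (PiM {0..<n} (\<lambda>_. NN f)). z i \<in> A \<and> (\<forall>j\<in>T. z i < z j \<and> z j - z i \<in> J) \<and> (\<forall>j\<in>{0..<n}-{i}-T. z j \<le> z i)}
         \<in> sets (PiM {0..<n} (\<lambda>_. NN f))"
proof -
  let ?P = "PiM {0..<n} (\<lambda>_. NN f)"
  have fT: "finite T" using T finite_subset by blast
  define W1 where "W1 = {p::real\<times>real. fst p < snd p \<and> snd p - fst p \<in> J}"
  define W2 where "W2 = {p::real\<times>real. snd p \<le> fst p}"
  have "Measurable.pred (borel \<Otimes>\<^sub>M borel) (\<lambda>p::real\<times>real. fst p < snd p \<and> snd p - fst p \<in> J)"
    using J by measurable
  from predE[OF this] have W1m: "W1 \<in> sets (borel \<Otimes>\<^sub>M borel)" unfolding W1_def by (simp add: space_pair_measure)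
  have "Measurable.pred (borel \<Otimes>\<^sub>M borel) (\<lambda>p::real\<times>real. snd p \<le> fst p)"
    by measurable
  from predE[OF this] have W2m: "W2 \<in> sets (borel \<Otimes>\<^sub>M borel)" unfolding W2_def by (simp add: space_pair_measure)
  have "Measurable.pred ?P (\<lambda>z. z i \<in> A \<and> (\<forall>j\<in>T. (z i, z j) \<in> W1) \<and> (\<forall>j\<in>{0..<n}-{i}-T. (z i, z j) \<in> W2))"
    using fT T i W1m W2m A by (intro pred_intros_logic(3) pred_intros_finite(3) one_pred[OF ihr] pair_pred[OF ihr]) auto
  from predE[OF this] show ?thesis unfolding W1_def W2_def by simp
qed

end

context
  fixes M :: "'a measure" and X :: "nat \<Rightarrow> 'a \<Rightarrow> real" and f :: "real \<Rightarrow> real" and n k :: nat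
  assumes M: "prob_space M"
    and ihr: "IHR_density f"
    and dist: "\<And>i. i < n \<Longrightarrow> distributed M lborel (X i) (\<lambda>x. ennreal (f x))"
    and indep: "prob_space.indep_vars M (\<lambda>_. borel) X {0..<n}"
    and k: "2 \<le> k" "k \<le> n"
begin

lemma Xm: "i < n \<Longrightarrow> X i \<in> borel_measurable M"
  using distributed_measurable[OF dist] by simp

lemma Zm: "(\<lambda>\<omega>. \<lambda>i\<in>{0..<n}. X i \<omega>) \<in> measurable M (PiM {0..<n} (\<lambda>_. NN f))"
proof -
  have "(\<lambda>\<omega>. \<lambda>i\<in>{0..<n}. X i \<omega>) \<in> measurable M (PiM {0..<n} (\<lambda>_. borel))"
    by (rule measurable_restrict) (simp add: Xm)
  moreover have se: "sets (PiM {0..<n} (\<lambda>_. NN f)) = sets (PiM {0..<n} (\<lambda>_::nat. borel::real measure))"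
    by (rule sets_PiM_cong) (auto simp: sets_NN[OF ihr])
  ultimately show ?thesis unfolding measurable_cong_sets[OF refl se] by blast
qed

lemma Zdist: "distr M (PiM {0..<n} (\<lambda>_. borel)) (\<lambda>\<omega>. \<lambda>i\<in>{0..<n}. X i \<omega>) = PiM {0..<n} (\<lambda>_. NN f)"
proof -
  interpret prob_space M by (rule M)
  define X' where "X' i = (if i < n then X i else (\<lambda>_. 0))" for i
  have rv: "random_variable borel (X' i)" for i using Xm by (auto simp: X'_def)
  have "indep_vars (\<lambda>_. borel) X {0..<n} = indep_vars (\<lambda>_. borel) X' {0..<n}"
    by (rule indep_vars_cong) (auto simp: X'_def)
  then have ind': "indep_vars (\<lambda>_. borel) X' {0..<n}" using indep by simp
  have ne: "{0..<n} \<noteq> {}" using k by auto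
  have "distr M (PiM {0..<n} (\<lambda>_. borel)) (\<lambda>\<omega>. \<lambda>i\<in>{0..<n}. X' i \<omega>) = PiM {0..<n} (\<lambda>i. distr M borel (X' i))"
    using indep_vars_iff_distr_eq_PiM[OF ne rv] ind' by simp
  also have "\<dots> = PiM {0..<n} (\<lambda>_. NN f)"
  proof (rule PiM_cong)
    fix i assume "i \<in> {0..<n}"
    then have i: "i < n" by simp
    have "distr M borel (X' i) = distr M lborel (X i)"
      using i by (intro distr_cong) (auto simp: X'_def)
    also have "\<dots> = density lborel (\<lambda>x. ennreal (f x))"
      by (rule distributed_distr_eq_density[OF dist[OF i]])
    finally show "distr M borel (X' i) = NN f" by (simp add: NN_def[OF ihr])
  qed simp
  finally have eq1: "distr M (PiM {0..<n} (\<lambda>_. borel)) (\<lambda>\<omega>. \<lambda>i\<in>{0..<n}. X' i \<omega>) = PiM {0..<n} (\<lambda>_. NN f)" .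
  have eq2: "distr M (PiM {0..<n} (\<lambda>_. borel)) (\<lambda>\<omega>. \<lambda>i\<in>{0..<n}. X' i \<omega>)
      = distr M (PiM {0..<n} (\<lambda>_. borel)) (\<lambda>\<omega>. \<lambda>i\<in>{0..<n}. X i \<omega>)"
    by (rule distr_cong) (auto simp: X'_def restrict_def)
  show ?thesis using eq1 eq2 by simp
qed

lemma transfer:
  assumes B: "B \<in> sets (PiM {0..<n} (\<lambda>_. NN f))"
  shows "emeasure M ((\<lambda>\<omega>. \<lambda>i\<in>{0..<n}. X i \<omega>) -` B \<inter> space M) = emeasure (PiM {0..<n} (\<lambda>_. NN f)) B"
proof -
  have "sets (PiM {0..<n} (\<lambda>_. NN f)) = sets (PiM {0..<n} (\<lambda>_::nat. borel::real measure))"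
    by (rule sets_PiM_cong) (auto simp: sets_NN[OF ihr])
  then have B': "B \<in> sets (PiM {0..<n} (\<lambda>_::nat. borel::real measure))" using B by simp
  have m: "(\<lambda>\<omega>. \<lambda>i\<in>{0..<n}. X i \<omega>) \<in> measurable M (PiM {0..<n} (\<lambda>_. borel))"
    by (rule measurable_restrict) (simp add: Xm)
  show ?thesis
    using emeasure_distr[OF m B'] Zdist by simp
qed

lemma AE_inj: "AE \<omega> in M. inj_on (\<lambda>i. X i \<omega>) {0..<n}"
proof -
  have "AE \<omega> in M. \<forall>p\<in>{0..<n}\<times>{0..<n}. fst p \<noteq> snd p \<longrightarrow> X (snd p) \<omega> \<noteq> X (fst p) \<omega>"
  proof (rule AE_finite_allI)
    fix p assume p: "p \<in> {0..<n}\<times>{0..<n}"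
    obtain i j where pe: "p = (i,j)" by (cases p)
    show "AE \<omega> in M. fst p \<noteq> snd p \<longrightarrow> X (snd p) \<omega> \<noteq> X (fst p) \<omega>"
    proof (cases "i = j")
      case True then show ?thesis using pe by simp
    next
      case False
      let ?P = "PiM {0..<n} (\<lambda>_. NN f)"
      let ?Z = "\<lambda>\<omega>. \<lambda>i\<in>{0..<n}. X i \<omega>"
      have ij: "i < n" "j < n" using p pe by auto
      have Bs: "{z \<in> space ?P. z j = z i} \<in> sets ?P"
      proof -
        have "closed {p::real\<times>real. snd p = fst p}"
          by (intro closed_Collect_eq continuous_intros)
        then have "{p::real\<times>real. snd p = fst p} \<in> sets borel" by (rule borel_closed)
        then have W: "{p::real\<times>real. snd p = fst p} \<in> sets (borel \<Otimes>\<^sub>M borel)"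
          unfolding borel_prod .
        have "Measurable.pred ?P (\<lambda>z. (z i, z j) \<in> {p::real\<times>real. snd p = fst p})"
          by (rule pair_pred[OF ihr ij W])
        from predE[OF this] show ?thesis by simp
      qed
      have pre: "?Z -` {z \<in> space ?P. z j = z i} \<inter> space M = {\<omega> \<in> space M. X j \<omega> = X i \<omega>}"
        using measurable_space[OF Zm] ij by auto
      then have "emeasure M {\<omega> \<in> space M. X j \<omega> = X i \<omega>} = 0"
        using transfer[OF Bs] tie_null[OF ihr ij False] by simp
      moreover have "{\<omega> \<in> space M. X j \<omega> = X i \<omega>} \<in> sets M"
        using measurable_sets[OF Zm Bs] pre by simp
      ultimately have "{\<omega> \<in> space M. X j \<omega> = X i \<omega>} \<in> null_sets M" by auto
      then show ?thesis using pe by (intro AE_I'[of "{\<omega> \<in> space M. X j \<omega> = X i \<omega>}"]) auto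
    qed
  qed simp
  then show ?thesis
    by (rule eventually_mono) (auto simp: inj_on_def)
qed

lemma event_formula:
  fixes A J :: "real set"
  assumes A: "A \<in> sets borel" and J: "J \<in> sets borel"
    and up: "\<forall>a b. a \<in> J \<longrightarrow> a \<le> b \<longrightarrow> b \<in> J"
    and ev: "{\<omega>\<in>space M. ord_stat n k (\<lambda>i. X i \<omega>) \<in> A \<and> ord_stat n (k-1) (\<lambda>i. X i \<omega>) - ord_stat n k (\<lambda>i. X i \<omega>) \<in> J} \<in> sets M"
  shows "emeasure M {\<omega>\<in>space M. ord_stat n k (\<lambda>i. X i \<omega>) \<in> A \<and> ord_stat n (k-1) (\<lambda>i. X i \<omega>) - ord_stat n k (\<lambda>i. X i \<omega>) \<in> J}
       = of_nat (card (Ixs n k)) * beta f n k A J"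
proof -
  let ?ev = "{\<omega>\<in>space M. ord_stat n k (\<lambda>i. X i \<omega>) \<in> A \<and> ord_stat n (k-1) (\<lambda>i. X i \<omega>) - ord_stat n k (\<lambda>i. X i \<omega>) \<in> J}"
  let ?P = "PiM {0..<n} (\<lambda>_. NN f)"
  let ?Z = "\<lambda>\<omega>. \<lambda>i\<in>{0..<n}. X i \<omega>"
  define E where "E x = (case x of (i,T) \<Rightarrow> {z \<in> space ?P. z i \<in> A \<and> (\<forall>j\<in>T. z i < z j \<and> z j - z i \<in> J) \<and> (\<forall>j\<in>{0..<n}-{i}-T. z j \<le> z i)})" for x
  define B where "B x = ?Z -` E x \<inter> space M" for x
  have Es: "E x \<in> sets ?P" if "x \<in> Ixs n k" for x
    using that E_sets[OF ihr _ _ A J] by (auto simp: E_def Ixs_def)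
  have Bs: "B x \<in> sets M" if "x \<in> Ixs n k" for x
    unfolding B_def using measurable_sets[OF Zm Es[OF that]] .
  have EB: "emeasure M (B x) = beta f n k A J" if x: "x \<in> Ixs n k" for x
  proof -
    obtain i T where xe: "x = (i,T)" by (cases x)
    with x have i: "i < n" and T: "T \<subseteq> {0..<n}-{i}" "card T = k - 1" by (auto simp: Ixs_def)
    have cK: "card ({0..<n}-{i}-T) = n - k"
    proof -
      have "finite ({0..<n}-{i})" by simp
      then have "card ({0..<n}-{i}-T) = card ({0..<n}-{i}) - card T"
        using card_Diff_subset[OF finite_subset[OF T(1)] T(1)] by simp
      also have "card ({0..<n}-{i}) = n - 1" using i by simp
      finally show ?thesis using T(2) k by simp
    qed
    have "emeasure M (B x) = emeasure ?P (E x)"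
      unfolding B_def by (rule transfer[OF Es[OF x]])
    also have "\<dots> = beta f n k A J"
      unfolding xe E_def beta_def using Emeas[OF ihr i T(1) A J] T(2) cK by simp
    finally show ?thesis .
  qed
  have "emeasure M ?ev = (\<integral>\<^sup>+ \<omega>. indicator ?ev \<omega> \<partial>M)" using ev by simp
  also have "\<dots> = (\<integral>\<^sup>+ \<omega>. (\<Sum>x\<in>Ixs n k. indicator (B x) \<omega>) \<partial>M)"
  proof (rule nn_integral_cong_AE)
    show "AE \<omega> in M. indicator ?ev \<omega> = (\<Sum>x\<in>Ixs n k. indicator (B x) \<omega> :: ennreal)"
      using AE_inj AE_space
    proof eventually_elim
      fix \<omega> assume inj: "inj_on (\<lambda>i. X i \<omega>) {0..<n}" and \<omega>: "\<omega> \<in> space M"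
      let ?z = "\<lambda>i. X i \<omega>"
      let ?Q = "\<lambda>(i,T). ?z i \<in> A \<and> (\<forall>j\<in>T. ?z i < ?z j \<and> ?z j - ?z i \<in> J) \<and> (\<forall>j\<in>{0..<n}-{i}-T. ?z j \<le> ?z i)"
      have Zsp: "?Z \<omega> \<in> space ?P" using measurable_space[OF Zm \<omega>] .
      have ind: "indicator (B x) \<omega> = (if ?Q x then 1 else (0::ennreal))" if "x \<in> Ixs n k" for x
      proof -
        obtain i T where xe: "x = (i,T)" by (cases x)
        with that have i: "i < n" and T: "T \<subseteq> {0..<n}-{i}" by (auto simp: Ixs_def)
        have "\<omega> \<in> B x \<longleftrightarrow> ?Q x"
          using i T Zsp \<omega> by (auto simp: B_def E_def xe subset_iff)
        then show ?thesis by (simp add: indicator_def)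
      qed
      have "(\<Sum>x\<in>Ixs n k. indicator (B x) \<omega>) = (\<Sum>x\<in>Ixs n k. if ?Q x then 1 else (0::ennreal))"
        by (intro sum.cong refl) (simp add: ind)
      also have "\<dots> = (\<Sum>x\<in>{x\<in>Ixs n k. ?Q x}. 1)"
        by (subst sum.inter_filter[OF finite_Ixs]) simp
      also have "\<dots> = of_nat (card {x\<in>Ixs n k. ?Q x})" by simp
      also have "{x\<in>Ixs n k. ?Q x} = {(i,T). (i < n \<and> T \<subseteq> {0..<n}-{i} \<and> card T = k - 1) \<and>
            (?z i \<in> A \<and> (\<forall>j\<in>T. ?z i < ?z j \<and> ?z j - ?z i \<in> J) \<and> (\<forall>j\<in>{0..<n}-{i}-T. ?z j \<le> ?z i))}"
        by (auto simp: Ixs_def)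
      also have "card \<dots> = (if ord_stat n k ?z \<in> A \<and> ord_stat n (k-1) ?z - ord_stat n k ?z \<in> J then 1 else 0)"
        by (rule count_lemma[OF inj k up])
      finally show "indicator ?ev \<omega> = (\<Sum>x\<in>Ixs n k. indicator (B x) \<omega> :: ennreal)"
        using \<omega> by (simp add: indicator_def)
    qed
  qed
  also have "\<dots> = (\<Sum>x\<in>Ixs n k. \<integral>\<^sup>+ \<omega>. indicator (B x) \<omega> \<partial>M)"
    by (rule nn_integral_sum) (use Bs in auto)
  also have "\<dots> = (\<Sum>x\<in>Ixs n k. beta f n k A J)"
    by (intro sum.cong refl) (simp add: Bs EB)
  also have "\<dots> = of_nat (card (Ixs n k)) * beta f n k A J" by simp
  finally show ?thesis .
qed

end


context
  fixes f :: "real \<Rightarrow> real"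
  assumes ihr: "IHR_density f"
begin

lemma emeasure_NN_eq: "A \<in> sets borel \<Longrightarrow> emeasure (NN f) A = ennreal (measure (NN f) A)"
  using finite_measure.emeasure_eq_measure[OF prob_space.finite_measure[OF NN_prob[OF ihr]]] by simp

lemma GJ_rep:
  assumes J: "J \<in> sets borel" and up: "\<forall>a b. a \<in> J \<longrightarrow> a \<le> b \<longrightarrow> b \<in> J"
  shows "(\<forall>x. GJ f J x = 0) \<or> (\<exists>b\<ge>0. \<forall>x. GJ f J x = ennreal (GG f (x + b)))"
proof (cases "J \<inter> {0<..} = {}")
  case True
  have e: "{t. x < t \<and> t - x \<in> J} = {}" for x using True by auto
  show ?thesis by (simp only: GJ_def[OF ihr] e emeasure_empty) simp
next
  case False
  define b where "b = Inf (J \<inter> {0<..})"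
  have bdd: "bdd_below (J \<inter> {0<..})" by (auto intro: bdd_belowI[of _ 0])
  have b0: "0 \<le> b" unfolding b_def using False by (intro cInf_greatest) auto
  have "GJ f J x = ennreal (GG f (x + b))" for x
  proof -
    have s1: "{x+b<..} \<subseteq> {t. x < t \<and> t - x \<in> J}"
    proof
      fix t assume "t \<in> {x+b<..}"
      then have "Inf (J \<inter> {0<..}) < t - x" by (simp add: b_def)
      then obtain c where c: "c \<in> J \<inter> {0<..}" "c < t - x"
        using cInf_less_iff[OF False bdd] by auto
      then show "t \<in> {t. x < t \<and> t - x \<in> J}" using up by auto
    qed
    have s2: "{t. x < t \<and> t - x \<in> J} \<subseteq> {x+b..}"
    proof
      fix t assume "t \<in> {t. x < t \<and> t - x \<in> J}"
      then have "t - x \<in> J \<inter> {0<..}" by auto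
      then have "b \<le> t - x" unfolding b_def using bdd by (rule cInf_lower)
      then show "t \<in> {x+b..}" by simp
    qed
    have ms: "{t. x < t \<and> t - x \<in> J} \<in> sets borel" using J by measurable
    have "emeasure (NN f) {x+b<..} \<le> GJ f J x"
      unfolding GJ_def[OF ihr] by (rule emeasure_mono[OF s1]) (simp add: ms sets_NN[OF ihr])
    moreover have "GJ f J x \<le> emeasure (NN f) {x+b..}"
      unfolding GJ_def[OF ihr] by (rule emeasure_mono[OF s2]) (simp add: sets_NN[OF ihr])
    moreover have "emeasure (NN f) {x+b<..} = ennreal (GG f (x+b))"
      by (simp add: emeasure_NN_eq GG_eq[OF ihr])
    moreover have "emeasure (NN f) {x+b..} = ennreal (GG f (x+b))"
      by (simp add: emeasure_NN_eq GG_eq2[OF ihr])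
    ultimately show ?thesis by (metis antisym)
  qed
  then show ?thesis using b0 by blast
qed

lemma GJ_UNIV: "GJ f UNIV x = ennreal (GG f x)"
proof -
  have "{t. x < t \<and> t - x \<in> UNIV} = {x<..}" by auto
  then show ?thesis by (simp add: GJ_def[OF ihr] emeasure_NN_eq GG_eq[OF ihr])
qed

lemma Fe_eq: "Fe f x = ennreal (cdf_of_density f x)"
  by (simp add: Fe_def[OF ihr] emeasure_NN_eq F_eq[OF ihr])

lemma GG_mono: "x \<le> y \<Longrightarrow> GG f y \<le> GG f x"
  using GG_diff[OF ihr, of x y] measure_nonneg[of "NN f" "{x<..y}"] by linarith

lemma GG_le1: "GG f x \<le> 1"
  using F_eq[OF ihr, of x] measure_nonneg[of "NN f" "{..x}"] by (simp add: GG_def[OF ihr])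

lemma F_nonneg: "0 \<le> cdf_of_density f x"
  using F_eq[OF ihr, of x] measure_nonneg[of "NN f" "{..x}"] by simp

definition "ww n k A g = (\<integral>\<^sup>+ y. ennreal (f y * indicator A y * g y ^ (k-1) * cdf_of_density f y ^ (n-k)) \<partial>lborel)"

lemma beta_ww:
  assumes "\<And>x. GJ f J x = ennreal (g x)" "\<And>x. 0 \<le> g x"
  shows "beta f n k A J = ww n k A g"
  unfolding beta_def ww_def
  by (intro nn_integral_cong)
     (simp add: assms Fe_eq f_nonneg[OF ihr] F_nonneg ennreal_mult' ennreal_power[symmetric] indicator_def mult.assoc)

lemma F_meas: "cdf_of_density f \<in> borel_measurable borel"
proof -
  have "continuous_on UNIV (cdf_of_density f)" using F_cont[OF ihr] by (simp add: continuous_at_imp_continuous_on)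
  then show ?thesis by (rule borel_measurable_continuous_onI)
qed

lemma GG_meas: "(\<lambda>y. GG f (y + b)) \<in> borel_measurable borel"
proof -
  have "continuous_on UNIV (\<lambda>y. GG f (y + b))"
    by (intro continuous_on_compose2[OF GG_cont[OF ihr, of UNIV]] continuous_intros) auto
  then show ?thesis by (rule borel_measurable_continuous_onI)
qed

lemma ww_meas:
  assumes A: "A \<in> sets borel" and g: "g \<in> borel_measurable borel"
  shows "(\<lambda>y. ennreal (f y * indicator A y * g y ^ (k-1) * cdf_of_density f y ^ (n-k))) \<in> borel_measurable lborel"
proof -
  note [measurable] = f_meas[OF ihr] F_meas g A
  show ?thesis by simp
qed

lemma ww_split:
  assumes A: "A \<in> sets borel" and g: "g \<in> borel_measurable borel"
  shows "ww n k UNIV g = ww n k A g + ww n k (-A) g"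
proof -
  have "ww n k A g + ww n k (-A) g = (\<integral>\<^sup>+ y. ennreal (f y * indicator A y * g y ^ (k-1) * cdf_of_density f y ^ (n-k))
        + ennreal (f y * indicator (-A) y * g y ^ (k-1) * cdf_of_density f y ^ (n-k)) \<partial>lborel)"
    unfolding ww_def
    by (rule nn_integral_add[symmetric]) (use ww_meas[OF A g] ww_meas[OF _ g, of "-A"] A in auto)
  also have "\<dots> = ww n k UNIV g"
    unfolding ww_def by (intro nn_integral_cong) (auto simp: indicator_def)
  finally show ?thesis by simp
qed

lemma ww_cmult:
  assumes A: "A \<in> sets borel" and g: "g \<in> borel_measurable borel" and c: "0 \<le> c"
  shows "ennreal c * ww n k A g = (\<integral>\<^sup>+ y. ennreal (c * (f y * indicator A y * g y ^ (k-1) * cdf_of_density f y ^ (n-k))) \<partial>lborel)"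
proof -
  have "ennreal c * ww n k A g = (\<integral>\<^sup>+ y. ennreal c * ennreal (f y * indicator A y * g y ^ (k-1) * cdf_of_density f y ^ (n-k)) \<partial>lborel)"
    unfolding ww_def by (rule nn_integral_cmult[symmetric]) (use ww_meas[OF A g] in simp)
  also have "\<dots> = (\<integral>\<^sup>+ y. ennreal (c * (f y * indicator A y * g y ^ (k-1) * cdf_of_density f y ^ (n-k))) \<partial>lborel)"
    by (intro nn_integral_cong) (simp add: ennreal_mult' c)
  finally show ?thesis .
qed

lemma psi_anti:
  assumes "0 \<le> x" "x \<le> y" "0 \<le> b"
  shows "GG f (y + b) / GG f y \<le> GG f (x + b) / GG f x"
  using ihr_key[OF ihr assms] GG_pos[OF ihr, of x] GG_pos[OF ihr, of y]
  by (simp add: divide_le_eq mult.commute mult.left_commute pos_le_divide_eq mult.assoc)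

lemma ww_ineq:
  assumes I: "I \<in> sets borel" and up: "\<forall>a b. a \<in> I \<longrightarrow> a \<le> b \<longrightarrow> b \<in> I" and b: "0 \<le> b"
  shows "ww n k I (\<lambda>y. GG f (y + b)) * ww n k (-I) (GG f) \<le> ww n k I (GG f) * ww n k (-I) (\<lambda>y. GG f (y + b))"
proof -
  define \<psi> where "\<psi> y = GG f (y + b) / GG f y" for y
  have psi0: "0 \<le> \<psi> y" for y unfolding \<psi>_def using GG_pos[OF ihr, of y] GG_pos[OF ihr, of "y+b"] by simp
  have psi1: "\<psi> y \<le> 1" for y unfolding \<psi>_def using GG_pos[OF ihr, of y] GG_mono[of y "y+b"] b by simp
  have psia: "0 \<le> x \<Longrightarrow> x \<le> y \<Longrightarrow> \<psi> y \<le> \<psi> x" for x y unfolding \<psi>_def using psi_anti b by simp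
  obtain m where m0: "0 \<le> m" and mI: "\<And>x. x \<in> I \<Longrightarrow> 0 \<le> x \<Longrightarrow> \<psi> x \<le> m"
    and mC: "\<And>y. y \<notin> I \<Longrightarrow> 0 \<le> y \<Longrightarrow> m \<le> \<psi> y"
  proof (cases "{y. y \<notin> I \<and> 0 \<le> y} = {}")
    case True
    show ?thesis by (rule that[of 1]) (use True psi1 in auto)
  next
    case False
    define m where "m = Inf (\<psi> ` {y. y \<notin> I \<and> 0 \<le> y})"
    have bdd: "bdd_below (\<psi> ` {y. y \<notin> I \<and> 0 \<le> y})" using psi0 by (auto intro: bdd_belowI[of _ 0])
    show ?thesis
    proof (rule that[of m])
      show "0 \<le> m" unfolding m_def using False psi0 by (intro cInf_greatest) auto
      fix x assume x: "x \<in> I" "0 \<le> x"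
      show "\<psi> x \<le> m" unfolding m_def
      proof (rule cInf_greatest)
        show "\<psi> ` {y. y \<notin> I \<and> 0 \<le> y} \<noteq> {}" using False by auto
        fix v assume "v \<in> \<psi> ` {y. y \<notin> I \<and> 0 \<le> y}"
        then obtain y where y: "y \<notin> I" "0 \<le> y" "v = \<psi> y" by auto
        have "y \<le> x" using up x y by (meson linear)
        then show "\<psi> x \<le> v" using psia[OF y(2)] y by simp
      qed
    next
      fix y assume y: "y \<notin> I" "0 \<le> y"
      show "m \<le> \<psi> y" unfolding m_def using bdd y by (intro cInf_lower) auto
    qed
  qed
  define m' where "m' = m ^ (k-1)"
  have m'0: "0 \<le> m'" using m0 by (simp add: m'_def)
  have gm: "(\<lambda>y. GG f (y + b)) \<in> borel_measurable borel" by (rule GG_meas)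
  have g0: "GG f \<in> borel_measurable borel" using GG_meas[of 0] by simp
  have Ic: "-I \<in> sets borel" using I by simp
  have key: "GG f (y + b) = \<psi> y * GG f y" for y
    unfolding \<psi>_def using GG_pos[OF ihr, of y] by simp
  have fz: "y < 0 \<Longrightarrow> f y = 0" for y by (rule f_neg[OF ihr])
  have fF: "0 \<le> f y * cdf_of_density f y ^ (n-k)" for y using f_nonneg[OF ihr, of y] F_nonneg[of y] by simp
  have A1: "ww n k I (\<lambda>y. GG f (y + b)) \<le> ennreal m' * ww n k I (GG f)"
    unfolding ww_cmult[OF I g0 m'0] unfolding ww_def
  proof (intro nn_integral_mono ennreal_leI)
    fix y
    show "f y * indicator I y * GG f (y + b) ^ (k - 1) * cdf_of_density f y ^ (n - k)
        \<le> m' * (f y * indicator I y * GG f y ^ (k - 1) * cdf_of_density f y ^ (n - k))"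
    proof (cases "y \<in> I \<and> 0 \<le> y")
      case True
      have "GG f (y + b) ^ (k-1) \<le> (m * GG f y) ^ (k-1)"
        using key[of y] mI[of y] True psi0[of y] GG_pos[OF ihr, of y]
        by (intro power_mono) (auto intro: mult_right_mono)
      then have "GG f (y + b) ^ (k-1) \<le> m' * GG f y ^ (k-1)" by (simp add: m'_def power_mult_distrib)
      then have "(f y * cdf_of_density f y ^ (n-k)) * GG f (y + b) ^ (k-1) \<le> (f y * cdf_of_density f y ^ (n-k)) * (m' * GG f y ^ (k-1))"
        by (rule mult_left_mono[OF _ fF])
      then show ?thesis using True by (simp add: ac_simps)
    next
      case False
      then show ?thesis using fz by (cases "y \<in> I") auto
    qed
  qed
  have A2: "ennreal m' * ww n k (-I) (GG f) \<le> ww n k (-I) (\<lambda>y. GG f (y + b))"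
    unfolding ww_cmult[OF Ic g0 m'0] unfolding ww_def
  proof (intro nn_integral_mono ennreal_leI)
    fix y
    show "m' * (f y * indicator (-I) y * GG f y ^ (k - 1) * cdf_of_density f y ^ (n - k))
        \<le> f y * indicator (-I) y * GG f (y + b) ^ (k - 1) * cdf_of_density f y ^ (n - k)"
    proof (cases "y \<notin> I \<and> 0 \<le> y")
      case True
      have "(m * GG f y) ^ (k-1) \<le> GG f (y + b) ^ (k-1)"
        using key[of y] mC[of y] True m0 GG_pos[OF ihr, of y]
        by (intro power_mono) (auto intro: mult_right_mono)
      then have "m' * GG f y ^ (k-1) \<le> GG f (y + b) ^ (k-1)" by (simp add: m'_def power_mult_distrib)
      then have "(f y * cdf_of_density f y ^ (n-k)) * (m' * GG f y ^ (k-1)) \<le> (f y * cdf_of_density f y ^ (n-k)) * GG f (y + b) ^ (k-1)"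
        by (rule mult_left_mono[OF _ fF])
      then show ?thesis using True by (simp add: ac_simps)
    next
      case False
      then show ?thesis using fz by (cases "y \<in> I") auto
    qed
  qed
  have "ww n k I (\<lambda>y. GG f (y + b)) * ww n k (-I) (GG f) \<le> (ennreal m' * ww n k I (GG f)) * ww n k (-I) (GG f)"
    using A1 by (rule mult_right_mono) simp
  also have "\<dots> = ww n k I (GG f) * (ennreal m' * ww n k (-I) (GG f))" by (simp add: ac_simps)
  also have "\<dots> \<le> ww n k I (GG f) * ww n k (-I) (\<lambda>y. GG f (y + b))"
    using A2 by (rule mult_left_mono) simp
  finally show ?thesis .
qed

end


context
  fixes M :: "'a measure" and X :: "nat \<Rightarrow> 'a \<Rightarrow> real" and f :: "real \<Rightarrow> real" and n k :: nat
  assumes M: "prob_space M"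
    and ihr: "IHR_density f"
    and dist: "\<And>i. i < n \<Longrightarrow> distributed M lborel (X i) (\<lambda>x. ennreal (f x))"
    and indep: "prob_space.indep_vars M (\<lambda>_. borel) X {0..<n}"
    and k: "2 \<le> k" "k \<le> n"
begin

abbreviation "YY \<omega> \<equiv> ord_stat n k (\<lambda>i. X i \<omega>)"
abbreviation "SS \<omega> \<equiv> ord_stat n (k-1) (\<lambda>i. X i \<omega>) - ord_stat n k (\<lambda>i. X i \<omega>)"

lemma NA_sets:
  fixes I J :: "real set"
  assumes I: "I \<in> sets borel" and upI: "\<forall>a b. a \<in> I \<longrightarrow> a \<le> b \<longrightarrow> b \<in> I"
    and J: "J \<in> sets borel" and upJ: "\<forall>a b. a \<in> J \<longrightarrow> a \<le> b \<longrightarrow> b \<in> J"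
    and e1: "{\<omega>\<in>space M. YY \<omega> \<in> I \<and> SS \<omega> \<in> J} \<in> sets M"
    and e2: "{\<omega>\<in>space M. YY \<omega> \<in> I \<and> SS \<omega> \<in> UNIV} \<in> sets M"
    and e3: "{\<omega>\<in>space M. YY \<omega> \<in> UNIV \<and> SS \<omega> \<in> J} \<in> sets M"
  shows "emeasure M {\<omega>\<in>space M. YY \<omega> \<in> I \<and> SS \<omega> \<in> J}
       \<le> emeasure M {\<omega>\<in>space M. YY \<omega> \<in> I \<and> SS \<omega> \<in> UNIV} * emeasure M {\<omega>\<in>space M. YY \<omega> \<in> UNIV \<and> SS \<omega> \<in> J}"
proof -
  interpret prob_space M by (rule M)
  have triv: "\<And>i. i < n \<Longrightarrow> i < n" by simp
  note EF = event_formula[OF M ihr dist indep k]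
  define c where "c = (of_nat (card (Ixs n k)) :: ennreal)"
  have upU: "\<forall>a b. a \<in> (UNIV::real set) \<longrightarrow> a \<le> b \<longrightarrow> b \<in> UNIV" by simp
  have e4: "{\<omega>\<in>space M. YY \<omega> \<in> UNIV \<and> SS \<omega> \<in> UNIV} = space M" by simp
  have f1: "emeasure M {\<omega>\<in>space M. YY \<omega> \<in> I \<and> SS \<omega> \<in> J} = c * beta f n k I J"
    unfolding c_def by (rule EF[OF _ I J upJ e1]) (simp add: triv)
  have f2: "emeasure M {\<omega>\<in>space M. YY \<omega> \<in> I \<and> SS \<omega> \<in> UNIV} = c * beta f n k I UNIV"
    unfolding c_def by (rule EF[OF _ I _ upU e2]) (simp_all add: triv)
  have f3: "emeasure M {\<omega>\<in>space M. YY \<omega> \<in> UNIV \<and> SS \<omega> \<in> J} = c * beta f n k UNIV J"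
    unfolding c_def by (rule EF[OF _ _ J upJ e3]) (simp_all add: triv)
  have f4: "1 = c * beta f n k UNIV UNIV"
    using EF[OF triv _ _ upU, of UNIV] e4 emeasure_space_1 unfolding c_def by simp
  have k1: "k - 1 \<noteq> 0" using k by simp
  have GU: "\<And>x. GJ f UNIV x = ennreal (GG f x)" by (rule GJ_UNIV[OF ihr])
  have GU0: "\<And>x. 0 \<le> GG f x" using GG_pos[OF ihr] less_imp_le by blast
  have bU: "beta f n k A UNIV = ww f n k A (GG f)" for A by (rule beta_ww[OF ihr GU GU0])
  show ?thesis
  proof (cases "\<forall>x. GJ f J x = 0")
    case True
    have z: "(0::ennreal) ^ (k - Suc 0) = 0" by (rule zero_power) (use k in simp)
    have "beta f n k I J = 0" unfolding beta_def using True by (simp only: One_nat_def z) simp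
    then show ?thesis using f1 by simp
  next
    case False
    then obtain b where b: "0 \<le> b" "\<And>x. GJ f J x = ennreal (GG f (x + b))"
      using GJ_rep[OF ihr J upJ] by blast
    have bJ: "beta f n k A J = ww f n k A (\<lambda>y. GG f (y + b))" for A
      by (rule beta_ww[OF ihr b(2)]) (simp add: GU0)
    have gm: "(\<lambda>y. GG f (y + b)) \<in> borel_measurable borel" by (rule GG_meas[OF ihr])
    have g0: "GG f \<in> borel_measurable borel" using GG_meas[OF ihr, of 0] by simp
    define a1 where "a1 = ww f n k I (\<lambda>y. GG f (y + b))"
    define a2 where "a2 = ww f n k (-I) (\<lambda>y. GG f (y + b))"
    define b1 where "b1 = ww f n k I (GG f)"
    define b2 where "b2 = ww f n k (-I) (GG f)"
    have sJ: "beta f n k UNIV J = a1 + a2" unfolding bJ a1_def a2_def by (rule ww_split[OF ihr I gm])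
    have sU: "beta f n k UNIV UNIV = b1 + b2" unfolding bU b1_def b2_def by (rule ww_split[OF ihr I g0])
    have ineq: "a1 * b2 \<le> b1 * a2" unfolding a1_def a2_def b1_def b2_def by (rule ww_ineq[OF ihr I upI b(1)])
    have "emeasure M {\<omega>\<in>space M. YY \<omega> \<in> I \<and> SS \<omega> \<in> J} = c * a1 * 1"
      using f1 bJ a1_def by simp
    also have "\<dots> = c * a1 * (c * (b1 + b2))" using f4 sU by simp
    also have "\<dots> = c * c * (a1 * b1) + c * c * (a1 * b2)" by (simp add: algebra_simps)
    also have "\<dots> \<le> c * c * (a1 * b1) + c * c * (b1 * a2)"
      using ineq by (intro add_left_mono mult_left_mono) auto
    also have "\<dots> = (c * b1) * (c * (a1 + a2))" by (simp add: algebra_simps)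
    also have "\<dots> = emeasure M {\<omega>\<in>space M. YY \<omega> \<in> I \<and> SS \<omega> \<in> UNIV} * emeasure M {\<omega>\<in>space M. YY \<omega> \<in> UNIV \<and> SS \<omega> \<in> J}"
      using f2 f3 bU b1_def sJ by simp
    finally show ?thesis .
  qed
qed

end


lemma layer:
  fixes M :: "'a measure" and w :: "'a \<Rightarrow> ennreal" and G :: "'a \<Rightarrow> real"
  assumes sf: "sigma_finite_measure M" and wm[measurable]: "w \<in> borel_measurable M"
    and Gm[measurable]: "G \<in> borel_measurable M" and G0: "\<And>\<omega>. 0 \<le> G \<omega>"
  shows "(\<integral>\<^sup>+ \<omega>. w \<omega> * ennreal (G \<omega>) \<partial>M)
       = (\<integral>\<^sup>+ u. indicator {0..} u * (\<integral>\<^sup>+ \<omega>. w \<omega> * indicator {\<omega>\<in>space M. u < G \<omega>} \<omega> \<partial>M) \<partial>lborel)"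
proof -
  interpret pair_sigma_finite M lborel
    by (intro pair_sigma_finite.intro sf) (rule lborel.sigma_finite_measure_axioms)
  define F where "F \<omega> u = (if 0 \<le> u \<and> u < G \<omega> then w \<omega> else 0)" for \<omega> u
  have Fm: "case_prod F \<in> borel_measurable (M \<Otimes>\<^sub>M lborel)"
    unfolding F_def by measurable
  have "(\<integral>\<^sup>+ \<omega>. w \<omega> * ennreal (G \<omega>) \<partial>M) = (\<integral>\<^sup>+ \<omega>. (\<integral>\<^sup>+ u. F \<omega> u \<partial>lborel) \<partial>M)"
  proof (intro nn_integral_cong)
    fix \<omega>
    have "(\<integral>\<^sup>+ u. F \<omega> u \<partial>lborel) = (\<integral>\<^sup>+ u. w \<omega> * indicator {0..<G \<omega>} u \<partial>lborel)"
      by (intro nn_integral_cong) (auto simp: F_def indicator_def)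
    also have "\<dots> = w \<omega> * emeasure lborel {0..<G \<omega>}"
      by (subst nn_integral_cmult_indicator) auto
    also have "\<dots> = w \<omega> * ennreal (G \<omega>)" using G0[of \<omega>] by simp
    finally show "w \<omega> * ennreal (G \<omega>) = (\<integral>\<^sup>+ u. F \<omega> u \<partial>lborel)" by simp
  qed
  also have "\<dots> = (\<integral>\<^sup>+ u. (\<integral>\<^sup>+ \<omega>. F \<omega> u \<partial>M) \<partial>lborel)"
    by (rule Fubini'[OF Fm, symmetric])
  also have "\<dots> = (\<integral>\<^sup>+ u. indicator {0..} u * (\<integral>\<^sup>+ \<omega>. w \<omega> * indicator {\<omega>\<in>space M. u < G \<omega>} \<omega> \<partial>M) \<partial>lborel)"
  proof (intro nn_integral_cong)
    fix u :: real
    have "(\<integral>\<^sup>+ \<omega>. F \<omega> u \<partial>M) = (\<integral>\<^sup>+ \<omega>. indicator {0..} u * (w \<omega> * indicator {\<omega>\<in>space M. u < G \<omega>} \<omega>) \<partial>M)"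
      by (intro nn_integral_cong) (auto simp: F_def indicator_def)
    also have "\<dots> = indicator {0..} u * (\<integral>\<^sup>+ \<omega>. w \<omega> * indicator {\<omega>\<in>space M. u < G \<omega>} \<omega> \<partial>M)"
      by (rule nn_integral_cmult) measurable
    finally show "(\<integral>\<^sup>+ \<omega>. F \<omega> u \<partial>M) = indicator {0..} u * (\<integral>\<^sup>+ \<omega>. w \<omega> * indicator {\<omega>\<in>space M. u < G \<omega>} \<omega> \<partial>M)" .
  qed
  finally show ?thesis .
qed


lemma ord_stat_mem:
  assumes "1 \<le> m" "m \<le> n"
  shows "ord_stat n m z \<in> z ` {0..<n}"
proof -
  have "m - 1 < length (rev (sort (map z [0..<n])))" using assms by simp
  then have "ord_stat n m z \<in> set (rev (sort (map z [0..<n])))"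
    unfolding ord_stat_def by (rule nth_mem)
  then show ?thesis by simp
qed

lemma ord_stat_mono:
  assumes "2 \<le> k" "k \<le> n"
  shows "ord_stat n k z \<le> ord_stat n (k-1) z"
proof -
  define s where "s = sort (map z [0..<n])"
  have ls: "length s = n" by (simp add: s_def)
  have so: "sorted s" by (simp add: s_def)
  have "ord_stat n k z = s ! (n - k)" using assms ls by (simp add: ord_stat_def s_def[symmetric] rev_nth)
  moreover have "ord_stat n (k-1) z = s ! (n - k + 1)"
    using assms ls by (simp add: ord_stat_def s_def[symmetric] rev_nth Suc_diff_le)
  moreover have "s ! (n - k) \<le> s ! (n - k + 1)"
    using so ls assms by (intro sorted_nth_mono) auto
  ultimately show ?thesis by simp
qed

lemma mono_borel_sets: "mono (g :: real \<Rightarrow> real) \<Longrightarrow> {x. t < g x} \<in> sets borel"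
proof -
  assume "mono g"
  then have [measurable]: "g \<in> borel_measurable borel" by (rule borel_measurable_mono)
  show ?thesis by measurable
qed

context
  fixes M :: "'a measure" and X :: "nat \<Rightarrow> 'a \<Rightarrow> real" and f :: "real \<Rightarrow> real" and n k :: nat
  assumes M: "prob_space M"
    and ihr: "IHR_density f"
    and dist: "\<And>i. i < n \<Longrightarrow> distributed M lborel (X i) (\<lambda>x. ennreal (f x))"
    and indep: "prob_space.indep_vars M (\<lambda>_. borel) X {0..<n}"
    and k: "2 \<le> k" "k \<le> n"
begin

lemma AE_YY_nonneg: "AE \<omega> in M. 0 \<le> ord_stat n k (\<lambda>i. X i \<omega>)"
proof -
  have "AE \<omega> in M. \<forall>i\<in>{0..<n}. 0 \<le> X i \<omega>"
  proof (rule AE_finite_allI)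
    fix i assume "i \<in> {0..<n}"
    then have i: "i < n" by simp
    have Xm: "X i \<in> borel_measurable M" using distributed_measurable[OF dist[OF i]] by simp
    have "emeasure M (X i -` {..<0} \<inter> space M) = emeasure (distr M lborel (X i)) {..<0}"
      by (rule emeasure_distr[symmetric]) (use Xm in auto)
    also have "\<dots> = emeasure (density lborel (\<lambda>x. ennreal (f x))) {..<0}"
      by (simp add: distributed_distr_eq_density[OF dist[OF i]])
    also have "\<dots> = (\<integral>\<^sup>+ x. ennreal (f x) * indicator {..<0} x \<partial>lborel)"
      by (rule emeasure_density) (use f_meas[OF ihr] in auto)
    also have "\<dots> = (\<integral>\<^sup>+ (x::real). 0 \<partial>lborel)"
      by (intro nn_integral_cong) (auto simp: indicator_def f_neg[OF ihr])
    finally have z: "emeasure M (X i -` {..<0} \<inter> space M) = 0" by simp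
    have "X i -` {..<0} \<inter> space M \<in> null_sets M"
      using z measurable_sets[OF Xm, of "{..<0}"] by auto
    then show "AE \<omega> in M. 0 \<le> X i \<omega>"
      by (rule AE_I') auto
  qed simp
  then show ?thesis
  proof (rule eventually_mono)
    fix \<omega> assume "\<forall>i\<in>{0..<n}. 0 \<le> X i \<omega>"
    moreover have "ord_stat n k (\<lambda>i. X i \<omega>) \<in> (\<lambda>i. X i \<omega>) ` {0..<n}"
      using k by (intro ord_stat_mem) auto
    ultimately show "0 \<le> ord_stat n k (\<lambda>i. X i \<omega>)" by auto
  qed
qed

lemma ennreal_cov:
  fixes g1 g2 :: "real \<Rightarrow> real"
  assumes m1: "mono g1" and m2: "mono g2" and p1: "\<And>x. 0 \<le> g1 x" and p2: "\<And>x. 0 \<le> g2 x"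
    and G1m: "(\<lambda>\<omega>. g1 (YY X n k \<omega>)) \<in> borel_measurable M"
    and G2m: "(\<lambda>\<omega>. g2 (SS X n k \<omega>)) \<in> borel_measurable M"
  shows "(\<integral>\<^sup>+ \<omega>. ennreal (g1 (YY X n k \<omega>) * g2 (SS X n k \<omega>)) \<partial>M)
       \<le> (\<integral>\<^sup>+ \<omega>. ennreal (g1 (YY X n k \<omega>)) \<partial>M) * (\<integral>\<^sup>+ \<omega>. ennreal (g2 (SS X n k \<omega>)) \<partial>M)"
proof -
  interpret prob_space M by (rule M)
  have sf: "sigma_finite_measure M" by (rule prob_space_imp_sigma_finite[OF M])
  define G1 where "G1 \<omega> = g1 (YY X n k \<omega>)" for \<omega>
  define G2 where "G2 \<omega> = g2 (SS X n k \<omega>)" for \<omega>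
  have G1m': "G1 \<in> borel_measurable M" using G1m by (simp add: G1_def[abs_def])
  have G2m': "G2 \<in> borel_measurable M" using G2m by (simp add: G2_def[abs_def])
  have G1p: "0 \<le> G1 \<omega>" for \<omega> by (simp add: G1_def p1)
  have G2p: "0 \<le> G2 \<omega>" for \<omega> by (simp add: G2_def p2)
  define A where "A t = {\<omega>\<in>space M. t < G1 \<omega>}" for t
  define B where "B u = {\<omega>\<in>space M. u < G2 \<omega>}" for u
  have As: "A t \<in> sets M" for t unfolding A_def using G1m' by measurable
  have Bs: "B u \<in> sets M" for u unfolding B_def using G2m' by measurable
  have triv: "\<And>i. i < n \<Longrightarrow> i < n" by simp
  have NA: "emeasure M (A t \<inter> B u) \<le> emeasure M (A t) * emeasure M (B u)" for t u
  proof -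
    have I: "{x. t < g1 x} \<in> sets borel" by (rule mono_borel_sets[OF m1])
    have J: "{x. u < g2 x} \<in> sets borel" by (rule mono_borel_sets[OF m2])
    have upI: "\<forall>a b. a \<in> {x. t < g1 x} \<longrightarrow> a \<le> b \<longrightarrow> b \<in> {x. t < g1 x}"
      using m1 by (auto dest: monoD intro: less_le_trans)
    have upJ: "\<forall>a b. a \<in> {x. u < g2 x} \<longrightarrow> a \<le> b \<longrightarrow> b \<in> {x. u < g2 x}"
      using m2 by (auto dest: monoD intro: less_le_trans)
    have e1: "{\<omega>\<in>space M. YY X n k \<omega> \<in> {x. t < g1 x} \<and> SS X n k \<omega> \<in> {x. u < g2 x}} = A t \<inter> B u"
      by (auto simp: A_def B_def G1_def G2_def)
    have e2: "{\<omega>\<in>space M. YY X n k \<omega> \<in> {x. t < g1 x} \<and> SS X n k \<omega> \<in> UNIV} = A t"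
      by (auto simp: A_def G1_def)
    have e3: "{\<omega>\<in>space M. YY X n k \<omega> \<in> UNIV \<and> SS X n k \<omega> \<in> {x. u < g2 x}} = B u"
      by (auto simp: B_def G2_def)
    show ?thesis
      using NA_sets[OF M ihr dist indep k, OF _ I upI J upJ] e1 e2 e3 As Bs triv
      by (metis (no_types, lifting) sets.Int)
  qed
  have "(\<integral>\<^sup>+ \<omega>. ennreal (G1 \<omega> * G2 \<omega>) \<partial>M) = (\<integral>\<^sup>+ \<omega>. ennreal (G2 \<omega>) * ennreal (G1 \<omega>) \<partial>M)"
    by (intro nn_integral_cong) (simp add: ennreal_mult G1p G2p mult.commute)
  also have "\<dots> = (\<integral>\<^sup>+ t. indicator {0..} t * (\<integral>\<^sup>+ \<omega>. ennreal (G2 \<omega>) * indicator (A t) \<omega> \<partial>M) \<partial>lborel)"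
    unfolding A_def by (rule layer[OF sf _ G1m' G1p]) (use G2m' in measurable)
  also have "\<dots> \<le> (\<integral>\<^sup>+ t. indicator {0..} t * ((\<integral>\<^sup>+ \<omega>. ennreal (G2 \<omega>) \<partial>M) * emeasure M (A t)) \<partial>lborel)"
  proof (intro nn_integral_mono mult_left_mono)
    fix t :: real
    have "(\<integral>\<^sup>+ \<omega>. ennreal (G2 \<omega>) * indicator (A t) \<omega> \<partial>M) = (\<integral>\<^sup>+ \<omega>. indicator (A t) \<omega> * ennreal (G2 \<omega>) \<partial>M)"
      by (simp add: mult.commute)
    also have "\<dots> = (\<integral>\<^sup>+ u. indicator {0..} u * (\<integral>\<^sup>+ \<omega>. indicator (A t) \<omega> * indicator (B u) \<omega> \<partial>M) \<partial>lborel)"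
      unfolding B_def by (rule layer[OF sf _ G2m' G2p]) (use As in measurable)
    also have "\<dots> = (\<integral>\<^sup>+ u. indicator {0..} u * emeasure M (A t \<inter> B u) \<partial>lborel)"
    proof (intro nn_integral_cong arg_cong2[where f="(*)"] refl)
      fix u
      have "(\<integral>\<^sup>+ \<omega>. indicator (A t) \<omega> * indicator (B u) \<omega> \<partial>M) = (\<integral>\<^sup>+ \<omega>. indicator (A t \<inter> B u) \<omega> \<partial>M)"
        by (intro nn_integral_cong) (simp add: indicator_inter_arith)
      also have "\<dots> = emeasure M (A t \<inter> B u)" using As Bs by simp
      finally show "(\<integral>\<^sup>+ \<omega>. indicator (A t) \<omega> * indicator (B u) \<omega> \<partial>M) = emeasure M (A t \<inter> B u)" .
    qed
    also have "\<dots> \<le> (\<integral>\<^sup>+ u. indicator {0..} u * (emeasure M (A t) * emeasure M (B u)) \<partial>lborel)"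
      by (intro nn_integral_mono mult_left_mono NA) simp
    also have "\<dots> = (\<integral>\<^sup>+ u. indicator {0..} u * (\<integral>\<^sup>+ \<omega>. emeasure M (A t) * indicator {\<omega>\<in>space M. u < G2 \<omega>} \<omega> \<partial>M) \<partial>lborel)"
      by (intro nn_integral_cong arg_cong2[where f="(*)"] refl)
         (simp add: nn_integral_cmult_indicator Bs[unfolded B_def] B_def)
    also have "\<dots> = (\<integral>\<^sup>+ \<omega>. emeasure M (A t) * ennreal (G2 \<omega>) \<partial>M)"
      by (rule layer[OF sf _ G2m' G2p, symmetric]) simp
    also have "\<dots> = (\<integral>\<^sup>+ \<omega>. ennreal (G2 \<omega>) \<partial>M) * emeasure M (A t)"
      by (subst nn_integral_cmult) (use G2m' in \<open>auto simp: mult.commute\<close>)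
    finally show "(\<integral>\<^sup>+ \<omega>. ennreal (G2 \<omega>) * indicator (A t) \<omega> \<partial>M) \<le> (\<integral>\<^sup>+ \<omega>. ennreal (G2 \<omega>) \<partial>M) * emeasure M (A t)" .
  qed simp
  also have "\<dots> = (\<integral>\<^sup>+ t. indicator {0..} t * (\<integral>\<^sup>+ \<omega>. (\<integral>\<^sup>+ \<omega>. ennreal (G2 \<omega>) \<partial>M) * indicator {\<omega>\<in>space M. t < G1 \<omega>} \<omega> \<partial>M) \<partial>lborel)"
    by (intro nn_integral_cong arg_cong2[where f="(*)"] refl)
       (simp add: nn_integral_cmult_indicator As[unfolded A_def] A_def)
  also have "\<dots> = (\<integral>\<^sup>+ \<omega>. (\<integral>\<^sup>+ \<omega>. ennreal (G2 \<omega>) \<partial>M) * ennreal (G1 \<omega>) \<partial>M)"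
    by (rule layer[OF sf _ G1m' G1p, symmetric]) simp
  also have "\<dots> = (\<integral>\<^sup>+ \<omega>. ennreal (G1 \<omega>) \<partial>M) * (\<integral>\<^sup>+ \<omega>. ennreal (G2 \<omega>) \<partial>M)"
    by (subst nn_integral_cmult) (use G1m' in \<open>auto simp: mult.commute\<close>)
  finally show ?thesis by (simp add: G1_def G2_def)
qed

end


theorem mainTheorem9:
  fixes M :: "'a measure" and X :: "nat \<Rightarrow> 'a \<Rightarrow> real" and f :: "real \<Rightarrow> real"
    and n k :: nat and f1 f2 :: "real \<Rightarrow> real"
  assumes "prob_space M"
    and ihr: "IHR_density f"
    and dist: "\<And>i. i < n \<Longrightarrow> distributed M lborel (X i) (\<lambda>x. ennreal (f x))"
    and indep: "prob_space.indep_vars M (\<lambda>_. borel) X {0..<n}"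
    and k: "2 \<le> k" "k \<le> n"
    and f1: "antimono f1" and f2: "antimono f2"
    and int1: "integrable M (\<lambda>\<omega>. f1 (ord_stat n k (\<lambda>i. X i \<omega>)))"
    and int2: "integrable M (\<lambda>\<omega>. f2 (ord_stat n (k - 1) (\<lambda>i. X i \<omega>) - ord_stat n k (\<lambda>i. X i \<omega>)))"
    and int12: "integrable M (\<lambda>\<omega>. f1 (ord_stat n k (\<lambda>i. X i \<omega>)) *
                 f2 (ord_stat n (k - 1) (\<lambda>i. X i \<omega>) - ord_stat n k (\<lambda>i. X i \<omega>)))"
  shows "(LINT \<omega>|M. f1 (ord_stat n k (\<lambda>i. X i \<omega>)) *
            f2 (ord_stat n (k - 1) (\<lambda>i. X i \<omega>) - ord_stat n k (\<lambda>i. X i \<omega>)))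
         \<le> (LINT \<omega>|M. f1 (ord_stat n k (\<lambda>i. X i \<omega>))) *
            (LINT \<omega>|M. f2 (ord_stat n (k - 1) (\<lambda>i. X i \<omega>) - ord_stat n k (\<lambda>i. X i \<omega>)))"
proof -
  note M = assms(1)
  interpret prob_space M by (rule M)
  define Y where "Y \<omega> = ord_stat n k (\<lambda>i. X i \<omega>)" for \<omega>
  define S where "S \<omega> = ord_stat n (k - 1) (\<lambda>i. X i \<omega>) - ord_stat n k (\<lambda>i. X i \<omega>)" for \<omega>
  define U1 where "U1 \<omega> = f1 (Y \<omega>)" for \<omega>
  define U2 where "U2 \<omega> = f2 (S \<omega>)" for \<omega>
  define c1 where "c1 = f1 0"
  define c2 where "c2 = f2 0"
  define g1 where "g1 x = max 0 (c1 - f1 x)" for x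
  define g2 where "g2 x = max 0 (c2 - f2 x)" for x
  define G1 where "G1 \<omega> = g1 (Y \<omega>)" for \<omega>
  define G2 where "G2 \<omega> = g2 (S \<omega>)" for \<omega>
  have iU1: "integrable M U1" using int1 by (simp add: U1_def[abs_def] Y_def)
  have iU2: "integrable M U2" using int2 by (simp add: U2_def[abs_def] S_def)
  have iU12: "integrable M (\<lambda>\<omega>. U1 \<omega> * U2 \<omega>)" using int12 by (simp add: U1_def U2_def Y_def S_def)
  have mU1[measurable]: "U1 \<in> borel_measurable M" using iU1 by (rule borel_measurable_integrable)
  have mU2[measurable]: "U2 \<in> borel_measurable M" using iU2 by (rule borel_measurable_integrable)
  have m1: "mono g1"
  proof (rule monoI)
    fix x y :: real assume "x \<le> y"
    then have "f1 y \<le> f1 x" using f1 by (simp add: antimono_def)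
    then show "g1 x \<le> g1 y" by (simp add: g1_def max_def)
  qed
  have m2: "mono g2"
  proof (rule monoI)
    fix x y :: real assume "x \<le> y"
    then have "f2 y \<le> f2 x" using f2 by (simp add: antimono_def)
    then show "g2 x \<le> g2 y" by (simp add: g2_def max_def)
  qed
  have G1eq: "G1 \<omega> = max 0 (c1 - U1 \<omega>)" for \<omega> by (simp add: G1_def g1_def U1_def)
  have G2eq: "G2 \<omega> = max 0 (c2 - U2 \<omega>)" for \<omega> by (simp add: G2_def g2_def U2_def)
  have mG1: "G1 \<in> borel_measurable M" unfolding G1eq[abs_def] by measurable
  have mG2: "G2 \<in> borel_measurable M" unfolding G2eq[abs_def] by measurable
  have S0: "0 \<le> S \<omega>" for \<omega> unfolding S_def using ord_stat_mono[OF k] by simp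
  have G2U: "G2 \<omega> = c2 - U2 \<omega>" for \<omega>
  proof -
    have "f2 (S \<omega>) \<le> f2 0" using f2 S0[of \<omega>] by (auto simp: antimono_def)
    then show ?thesis by (simp add: G2_def g2_def U2_def c2_def)
  qed
  have G1U: "AE \<omega> in M. G1 \<omega> = c1 - U1 \<omega>"
    using AE_YY_nonneg[OF M ihr dist indep k]
  proof (rule eventually_mono)
    fix \<omega> assume "0 \<le> ord_stat n k (\<lambda>i. X i \<omega>)"
    then have "f1 (Y \<omega>) \<le> f1 0" using f1 by (auto simp: antimono_def Y_def)
    then show "G1 \<omega> = c1 - U1 \<omega>" by (simp add: G1_def g1_def U1_def c1_def)
  qed
  have iG1: "integrable M G1"
    by (rule integrable_cong_AE_imp[OF _ _ AE_symmetric[OF G1U]]) (use iU1 mG1 in auto)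
  have iG2: "integrable M G2" unfolding G2U using iU1 iU2 by auto
  have G12eq: "AE \<omega> in M. G1 \<omega> * G2 \<omega> = c1 * c2 - c2 * U1 \<omega> - c1 * U2 \<omega> + U1 \<omega> * U2 \<omega>"
    using G1U
  proof (rule eventually_mono)
    fix \<omega> assume h: "G1 \<omega> = c1 - U1 \<omega>"
    show "G1 \<omega> * G2 \<omega> = c1 * c2 - c2 * U1 \<omega> - c1 * U2 \<omega> + U1 \<omega> * U2 \<omega>"
      unfolding h G2U by (simp add: algebra_simps)
  qed
  have iG12: "integrable M (\<lambda>\<omega>. G1 \<omega> * G2 \<omega>)"
    by (rule integrable_cong_AE_imp[OF _ _ AE_symmetric[OF G12eq]]) (use iU1 iU2 iU12 mG1 mG2 in auto)
  have G1p: "0 \<le> G1 \<omega>" for \<omega> by (simp add: G1_def g1_def)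
  have G2p: "0 \<le> G2 \<omega>" for \<omega> by (simp add: G2_def g2_def)
  have mG1': "(\<lambda>\<omega>. g1 (ord_stat n k (\<lambda>i. X i \<omega>))) \<in> borel_measurable M"
    using mG1 by (simp add: G1_def[abs_def] Y_def)
  have mG2': "(\<lambda>\<omega>. g2 (ord_stat n (k-1) (\<lambda>i. X i \<omega>) - ord_stat n k (\<lambda>i. X i \<omega>))) \<in> borel_measurable M"
    using mG2 by (simp add: G2_def[abs_def] S_def)
  have p1: "\<And>x. 0 \<le> g1 x" by (simp add: g1_def)
  have p2: "\<And>x. 0 \<le> g2 x" by (simp add: g2_def)
  have triv: "\<And>i. i < n \<Longrightarrow> i < n" by simp
  have cov0: "(\<integral>\<^sup>+ \<omega>. ennreal (g1 (ord_stat n k (\<lambda>i. X i \<omega>)) * g2 (ord_stat n (k-1) (\<lambda>i. X i \<omega>) - ord_stat n k (\<lambda>i. X i \<omega>))) \<partial>M)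
     \<le> (\<integral>\<^sup>+ \<omega>. ennreal (g1 (ord_stat n k (\<lambda>i. X i \<omega>))) \<partial>M) * (\<integral>\<^sup>+ \<omega>. ennreal (g2 (ord_stat n (k-1) (\<lambda>i. X i \<omega>) - ord_stat n k (\<lambda>i. X i \<omega>))) \<partial>M)"
    using ennreal_cov[OF M ihr dist indep k] m1 m2 p1 p2 mG1' mG2' triv by blast
  have cov: "(\<integral>\<^sup>+ \<omega>. ennreal (G1 \<omega> * G2 \<omega>) \<partial>M) \<le> (\<integral>\<^sup>+ \<omega>. ennreal (G1 \<omega>) \<partial>M) * (\<integral>\<^sup>+ \<omega>. ennreal (G2 \<omega>) \<partial>M)"
    using cov0 by (simp add: G1_def G2_def Y_def S_def)
  have e1: "(\<integral>\<^sup>+ \<omega>. ennreal (G1 \<omega>) \<partial>M) = ennreal (LINT \<omega>|M. G1 \<omega>)"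
    by (rule nn_integral_eq_integral[OF iG1]) (simp add: G1p)
  have e2: "(\<integral>\<^sup>+ \<omega>. ennreal (G2 \<omega>) \<partial>M) = ennreal (LINT \<omega>|M. G2 \<omega>)"
    by (rule nn_integral_eq_integral[OF iG2]) (simp add: G2p)
  have e12: "(\<integral>\<^sup>+ \<omega>. ennreal (G1 \<omega> * G2 \<omega>) \<partial>M) = ennreal (LINT \<omega>|M. G1 \<omega> * G2 \<omega>)"
    by (rule nn_integral_eq_integral[OF iG12]) (simp add: G1p G2p)
  have E1p: "0 \<le> (LINT \<omega>|M. G1 \<omega>)" using G1p by simp
  have E2p: "0 \<le> (LINT \<omega>|M. G2 \<omega>)" using G2p by simp
  have Eineq: "(LINT \<omega>|M. G1 \<omega> * G2 \<omega>) \<le> (LINT \<omega>|M. G1 \<omega>) * (LINT \<omega>|M. G2 \<omega>)"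
  proof -
    have "ennreal (LINT \<omega>|M. G1 \<omega> * G2 \<omega>) \<le> ennreal ((LINT \<omega>|M. G1 \<omega>) * (LINT \<omega>|M. G2 \<omega>))"
      using cov unfolding e1 e2 e12 by (simp add: ennreal_mult E1p E2p)
    then show ?thesis using E1p E2p by (simp add: ennreal_le_iff)
  qed
  have L1: "(LINT \<omega>|M. U1 \<omega>) = c1 - (LINT \<omega>|M. G1 \<omega>)"
  proof -
    have "(LINT \<omega>|M. U1 \<omega>) = (LINT \<omega>|M. c1 - G1 \<omega>)"
      by (rule integral_cong_AE) (use mU1 mG1 G1U in auto)
    also have "\<dots> = c1 - (LINT \<omega>|M. G1 \<omega>)" using iG1 by (simp add: prob_space)
    finally show ?thesis .
  qed
  have L2: "(LINT \<omega>|M. U2 \<omega>) = c2 - (LINT \<omega>|M. G2 \<omega>)"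
  proof -
    have "(LINT \<omega>|M. U2 \<omega>) = (LINT \<omega>|M. c2 - G2 \<omega>)" by (simp add: G2U)
    also have "\<dots> = c2 - (LINT \<omega>|M. G2 \<omega>)" using iG2 by (simp add: prob_space)
    finally show ?thesis .
  qed
  have L12: "(LINT \<omega>|M. U1 \<omega> * U2 \<omega>) = (LINT \<omega>|M. G1 \<omega> * G2 \<omega>) - c1 * c2 + c2 * (LINT \<omega>|M. U1 \<omega>) + c1 * (LINT \<omega>|M. U2 \<omega>)"
  proof -
    have "(LINT \<omega>|M. U1 \<omega> * U2 \<omega>) = (LINT \<omega>|M. (G1 \<omega> * G2 \<omega> - c1 * c2) + (c2 * U1 \<omega> + c1 * U2 \<omega>))"
      by (rule integral_cong_AE) (use mU1 mU2 mG1 mG2 G12eq in \<open>auto simp: algebra_simps\<close>)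
    also have "\<dots> = (LINT \<omega>|M. G1 \<omega> * G2 \<omega> - c1 * c2) + (LINT \<omega>|M. c2 * U1 \<omega> + c1 * U2 \<omega>)"
      by (rule Bochner_Integration.integral_add) (use iG12 iU1 iU2 in auto)
    also have "(LINT \<omega>|M. G1 \<omega> * G2 \<omega> - c1 * c2) = (LINT \<omega>|M. G1 \<omega> * G2 \<omega>) - c1 * c2"
      using iG12 by (simp add: prob_space)
    also have "(LINT \<omega>|M. c2 * U1 \<omega> + c1 * U2 \<omega>) = c2 * (LINT \<omega>|M. U1 \<omega>) + c1 * (LINT \<omega>|M. U2 \<omega>)"
      using iU1 iU2 by simp
    finally show ?thesis by simp
  qed
  have "(LINT \<omega>|M. U1 \<omega> * U2 \<omega>) \<le> (LINT \<omega>|M. U1 \<omega>) * (LINT \<omega>|M. U2 \<omega>)"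
    unfolding L12 L1 L2 using Eineq by (simp add: algebra_simps)
  then show ?thesis by (simp add: U1_def U2_def Y_def S_def)
qed


end
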